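(* Consider the recursive network formation model with the utility function described in the context. Suppose $$\gamma<\frac{b_2-b_3}{3b_2-b_3},$$ $$b_1-b_2+\gamma(3b_2-b_3)<c<b_1-b_3, \quad\text{and}\quad (1-\gamma)(b_2-b_3)<c_0\le(1-\gamma)b_2.$$ Then the resulting topology is a bipartite Turán graph: starting from a single node, for every $n\ge1$, the pairwise stable network reached after the $n$-th node has entered is the complete bipartite graph on $n$ nodes with parts of sizes $\lfloor n/2\rfloor$ and $\lceil n/2\rceil$, irrespective of the random order in which nodes are selected to move.
   Context: Networks are finite simple undirected graphs whose vertices (nodes) are self-interested agents. Parameters: benefits $b_1>b_2>b_3>b_4>\dots>0$, where $b_i$ is the benefit a node obtains from a node at distance $i$; a link cost $c$ per immediate neighbor; an intermediation fraction $\gamma$ with $0\le\gamma<1$; and a network entry factor $c_0$. Notation: $N$ is the set of nodes currently in the network, $d_j$ the degree of $j$, and $l(j,w)$ the graph distance. A node $x$ is essential for a pair $y,z$ (with $x\notin\{y,z\}$) if $x$ lies on every path joining $y$ and $z$. Write $E(y,z)$ for the set of nodes essential for $y,z$ and $e(y,z)=|E(y,z)|$. Only pairs joined by a path contribute to the sums below. Utility of node $j$ in network $g$: $$u_j(g)=-c_0\,d_{T(j)}\mathbf 1_{\{j=\mathrm{NE}\}}+d_j(b_1-c)+\sum_{w\in N,\ l(j,w)>1}b_{l(j,w)}-\sum_{w\in N,\ E(j,w)\ne\emptyset}\gamma\, b_{l(j,w)}+\sum_{y,z\in N,\ j\in E(y,z)}\frac{\gamma}{e(y,z)}\,2\,b_{l(y,z)}.$$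 Here $\mathbf 1_{\{j=\mathrm{NE}\}}=1$ exactly when $j$ is a newly entering node evaluating the creation of its first link. $T(j)$ is the existing node to which $j$ forms that first link, and $d_{T(j)}$ is that node's degree before the link. The network before entry gives the entering node utility $0$. Pairwise stability: $g$ is pairwise stable if (a) for every link $(i,j)\in g$, $u_i(g\setminus\{(i,j)\})\le u_i(g)$ and $u_j(g\setminus\{(i,j)\})\le u_j(g)$; and (b) for every non-link $(i,j)\notin g$, if $u_i(g\cup\{(i,j)\})>u_i(g)$ then $u_j(g\cup\{(i,j)\})<u_j(g)$. Recursive model of network formation: - The process starts with a single node. - When the current network of $n-1$ nodes is pairwise stable, a new node considers entering. Its options are to stay out or to propose a link to one existing node. The link forms iff the receiving node's utility does not decrease. No existing node can link to the newcomer before it has formed this first link. - After entry, nodes are repeatedly chosen at random to move. A chosen node plays a myopic best response among three options: create a link with a non-neighbor (the link forms only if the other node's utility does not decrease, which the proposer anticipates); delete a link with a neighbor (unilaterally); or keep the status quo. It alters a link only if this strictly increases its current utility. - This continues until the network is pairwise stable; then the next node considers entering, and so on. "The resulting topology is X" means: for every number $n$ of nodes, every pairwise stable network reached after the $n$-th node has entered is a network of topology X on $n$ nodes, irrespective of the random choices. *)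

theory Defs
  imports Complex_Main
begin

text \<open>Networks: nodes are natural numbers; the network with n nodes has node set {0..<n};
  links are unordered pairs, represented as two-element sets {i,j}.\<close>

type_synonym network = "nat set set"

definition nbr :: "network \<Rightarrow> nat \<Rightarrow> nat \<Rightarrow> bool" where
  "nbr g j k \<longleftrightarrow> j \<noteq> k \<and> {j, k} \<in> g"

definition degree :: "network \<Rightarrow> nat \<Rightarrow> nat" where
  "degree g j = card {k. nbr g j k}"

definition gpath :: "network \<Rightarrow> nat list \<Rightarrow> nat \<Rightarrow> nat \<Rightarrow> bool" where
  "gpath g xs y z \<longleftrightarrow> xs \<noteq> [] \<and> hd xs = y \<and> last xs = z \<and> distinct xs \<and>
     (\<forall>i. Suc i < length xs \<longrightarrow> nbr g (xs ! i) (xs ! Suc i))"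

definition joined :: "network \<Rightarrow> nat \<Rightarrow> nat \<Rightarrow> bool" where
  "joined g y z \<longleftrightarrow> (\<exists>xs. gpath g xs y z)"

text \<open>Graph distance l(y,z) (number of links of a shortest path); meaningful when joined.\<close>
definition gdist :: "network \<Rightarrow> nat \<Rightarrow> nat \<Rightarrow> nat" where
  "gdist g y z = (LEAST k. \<exists>xs. gpath g xs y z \<and> length xs = Suc k)"

definition ess :: "nat set \<Rightarrow> network \<Rightarrow> nat \<Rightarrow> nat \<Rightarrow> nat set" where
  "ess N g y z = {x \<in> N. x \<noteq> y \<and> x \<noteq> z \<and> (\<forall>xs. gpath g xs y z \<longrightarrow> x \<in> set xs)}"

text \<open>Utility of node j (without the entry cost term). Parameters: benefits b (b i is the benefit
  from a node at distance i), link cost c, intermediation fraction gam. The intermediation sum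
  runs over unordered pairs {y,z} (encoded as y < z).\<close>
definition util :: "(nat \<Rightarrow> real) \<Rightarrow> real \<Rightarrow> real \<Rightarrow> nat set \<Rightarrow> network \<Rightarrow> nat \<Rightarrow> real" where
  "util b c gam N g j =
     real (degree g j) * (b 1 - c)
     + (\<Sum>w \<in> {w \<in> N. joined g j w \<and> gdist g j w > 1}. b (gdist g j w))
     - (\<Sum>w \<in> {w \<in> N. joined g j w \<and> ess N g j w \<noteq> {}}. gam * b (gdist g j w))
     + (\<Sum>(y, z) \<in> {(y, z). y \<in> N \<and> z \<in> N \<and> y < z \<and> joined g y z \<and> j \<in> ess N g y z}.
          gam / real (card (ess N g y z)) * 2 * b (gdist g y z))"

definition pairwise_stable ::
  "(nat \<Rightarrow> real) \<Rightarrow> real \<Rightarrow> real \<Rightarrow> nat set \<Rightarrow> network \<Rightarrow> bool" where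
  "pairwise_stable b c gam N g \<longleftrightarrow>
     (\<forall>i \<in> N. \<forall>j \<in> N. nbr g i j \<longrightarrow>
        util b c gam N (g - {{i, j}}) i \<le> util b c gam N g i \<and>
        util b c gam N (g - {{i, j}}) j \<le> util b c gam N g j) \<and>
     (\<forall>i \<in> N. \<forall>j \<in> N. i \<noteq> j \<and> {i, j} \<notin> g \<longrightarrow>
        util b c gam N (insert {i, j} g) i > util b c gam N g i \<longrightarrow>
        util b c gam N (insert {i, j} g) j < util b c gam N g j)"

definition options ::
  "(nat \<Rightarrow> real) \<Rightarrow> real \<Rightarrow> real \<Rightarrow> nat set \<Rightarrow> network \<Rightarrow> nat \<Rightarrow> network set" where
  "options b c gam N g i =
     {insert {i, k} g | k. k \<in> N \<and> k \<noteq> i \<and> {i, k} \<notin> g \<and>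
          util b c gam N (insert {i, k} g) k \<ge> util b c gam N g k}
     \<union> {g - {{i, k}} | k. nbr g i k}"

definition move ::
  "(nat \<Rightarrow> real) \<Rightarrow> real \<Rightarrow> real \<Rightarrow> nat set \<Rightarrow> network \<Rightarrow> network \<Rightarrow> bool" where
  "move b c gam N g g' \<longleftrightarrow>
     (\<exists>i \<in> N. g' \<in> options b c gam N g i \<and>
        util b c gam N g' i > util b c gam N g i \<and>
        (\<forall>h \<in> options b c gam N g i. util b c gam N h i \<le> util b c gam N g' i))"

text \<open>Entry of node n into the network g on {0..<n}: it links to an existing node t.
  Its utility is -c0 * (degree of t before the link) + its utility in the new network;
  staying out gives 0. The newcomer anticipates acceptance (t's utility must not decrease),
  picks a best target, and enters only if this strictly beats staying out.\<close>
definition entry_util ::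
  "(nat \<Rightarrow> real) \<Rightarrow> real \<Rightarrow> real \<Rightarrow> real \<Rightarrow> nat \<Rightarrow> network \<Rightarrow> nat \<Rightarrow> real" where
  "entry_util b c gam c0 n g t =
     - c0 * real (degree g t) + util b c gam {0..<Suc n} (insert {n, t} g) n"

definition accepts ::
  "(nat \<Rightarrow> real) \<Rightarrow> real \<Rightarrow> real \<Rightarrow> nat \<Rightarrow> network \<Rightarrow> nat \<Rightarrow> bool" where
  "accepts b c gam n g t \<longleftrightarrow>
     util b c gam {0..<Suc n} (insert {n, t} g) t \<ge> util b c gam {0..<Suc n} g t"

definition entry_choice ::
  "(nat \<Rightarrow> real) \<Rightarrow> real \<Rightarrow> real \<Rightarrow> real \<Rightarrow> nat \<Rightarrow> network \<Rightarrow> nat \<Rightarrow> bool" where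
  "entry_choice b c gam c0 n g t \<longleftrightarrow>
     t < n \<and> accepts b c gam n g t \<and> entry_util b c gam c0 n g t > 0 \<and>
     (\<forall>t' < n. accepts b c gam n g t' \<longrightarrow>
        entry_util b c gam c0 n g t' \<le> entry_util b c gam c0 n g t)"

inductive reached ::
  "(nat \<Rightarrow> real) \<Rightarrow> real \<Rightarrow> real \<Rightarrow> real \<Rightarrow> nat \<Rightarrow> network \<Rightarrow> bool"
  for b c gam c0 where
  start: "reached b c gam c0 1 {}"
| enter: "reached b c gam c0 n g \<Longrightarrow> entry_choice b c gam c0 n g t \<Longrightarrow>
     (move b c gam {0..<Suc n})\<^sup>*\<^sup>* (insert {n, t} g) g' \<Longrightarrow>
     pairwise_stable b c gam {0..<Suc n} g' \<Longrightarrow>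
     reached b c gam c0 (Suc n) g'"

definition bipartite_turan :: "nat \<Rightarrow> network \<Rightarrow> bool" where
  "bipartite_turan n g \<longleftrightarrow>
     (\<exists>A \<subseteq> {0..<n}. card A = n div 2 \<and> g = {{x, y} | x y. x \<in> A \<and> y \<in> {0..<n} - A})"

end

theory Submission
  imports Defs
begin

lemma nbr_sym: "nbr g a b \<longleftrightarrow> nbr g b a"
  unfolding nbr_def by (auto simp: insert_commute)

lemma gpath_Nil[simp]: "\<not> gpath g [] y z"
  unfolding gpath_def by simp

lemma gpath_single[simp]: "gpath g [a] y z \<longleftrightarrow> a = y \<and> a = z"
  unfolding gpath_def by auto

lemma gpath_Cons2: "gpath g (a # b # xs) y z \<longleftrightarrow>
   a = y \<and> nbr g a b \<and> a \<notin> set (b # xs) \<and> gpath g (b # xs) b z"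
proof -
  have A: "(\<forall>i. Suc i < length (a # b # xs) \<longrightarrow> nbr g ((a # b # xs) ! i) ((a # b # xs) ! Suc i))
     \<longleftrightarrow> nbr g a b \<and> (\<forall>i. Suc i < length (b # xs) \<longrightarrow> nbr g ((b # xs) ! i) ((b # xs) ! Suc i))"
  proof
    assume H: "\<forall>i. Suc i < length (a # b # xs) \<longrightarrow> nbr g ((a # b # xs) ! i) ((a # b # xs) ! Suc i)"
    have "nbr g a b" using H[rule_format, of 0] by simp
    moreover have "\<forall>i. Suc i < length (b # xs) \<longrightarrow> nbr g ((b # xs) ! i) ((b # xs) ! Suc i)"
    proof (intro allI impI)
      fix i assume "Suc i < length (b # xs)"
      then show "nbr g ((b # xs) ! i) ((b # xs) ! Suc i)" using H[rule_format, of "Suc i"] by simp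
    qed
    ultimately show "nbr g a b \<and> (\<forall>i. Suc i < length (b # xs) \<longrightarrow> nbr g ((b # xs) ! i) ((b # xs) ! Suc i))" by blast
  next
    assume H: "nbr g a b \<and> (\<forall>i. Suc i < length (b # xs) \<longrightarrow> nbr g ((b # xs) ! i) ((b # xs) ! Suc i))"
    show "\<forall>i. Suc i < length (a # b # xs) \<longrightarrow> nbr g ((a # b # xs) ! i) ((a # b # xs) ! Suc i)"
    proof (intro allI impI)
      fix i assume "Suc i < length (a # b # xs)"
      then show "nbr g ((a # b # xs) ! i) ((a # b # xs) ! Suc i)"
        using H by (cases i) auto
    qed
  qed
  show ?thesis unfolding gpath_def using A by auto
qed

lemma gpath_mono: "gpath g xs y z \<Longrightarrow> (\<And>a b. nbr g a b \<Longrightarrow> nbr g' a b) \<Longrightarrow> gpath g' xs y z"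
  unfolding gpath_def by blast

lemma gpath_subset: "gpath g xs y z \<Longrightarrow> g \<subseteq> g' \<Longrightarrow> gpath g' xs y z"
  by (erule gpath_mono) (auto simp: nbr_def)

lemma gpath_hd: "gpath g xs y z \<Longrightarrow> y \<in> set xs"
  unfolding gpath_def by (cases xs) auto

lemma gpath_rev: "gpath g xs y z \<Longrightarrow> gpath g (rev xs) z y"
  unfolding gpath_def
  apply (auto simp: hd_rev last_rev)
  apply (subst rev_nth, simp)
  apply (subst rev_nth, simp)
  apply (subst nbr_sym)
  apply (drule_tac x = "length xs - Suc (Suc i)" in spec)
  by (auto simp: Suc_diff_Suc)

lemma gpath_cut:
  assumes "y \<in> C" "z \<notin> C" "v \<notin> C" "\<forall>a\<in>C. \<forall>b'. nbr g a b' \<longrightarrow> b' \<in> C \<or> b' = v"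
    and "gpath g xs y z"
  shows "v \<in> set xs"
  using assms(1,5)
proof (induction xs arbitrary: y)
  case Nil then show ?case by simp
next
  case (Cons a xs)
  show ?case
  proof (cases xs)
    case Nil then show ?thesis using Cons assms(2) by auto
  next
    case (Cons b' rest)
    have "a = y" "nbr g a b'" "gpath g (b' # rest) b' z"
      using \<open>gpath g (a # xs) y z\<close> unfolding Cons by (auto simp: gpath_Cons2)
    then have "b' \<in> C \<or> b' = v" using assms(4) \<open>y \<in> C\<close> by blast
    then show ?thesis
    proof
      assume "b' \<in> C" then show ?thesis using Cons.IH \<open>gpath g (b' # rest) b' z\<close> Cons by auto
    qed (auto simp: Cons)
  qed
qed

lemma gpath_len2: "gpath g xs y z \<Longrightarrow> y \<noteq> z \<Longrightarrow> 2 \<le> length xs"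
  by (cases xs rule: remdups_adj.cases) auto

lemma gpath_len3: "gpath g xs y z \<Longrightarrow> y \<noteq> z \<Longrightarrow> \<not> nbr g y z \<Longrightarrow> 3 \<le> length xs"
  apply (cases xs, simp)
  apply (rename_tac a l, case_tac l, simp)
  apply (rename_tac a l b l2, case_tac l2, auto simp: gpath_Cons2)
  done

lemma gpath_len4: "gpath g xs y z \<Longrightarrow> y \<noteq> z \<Longrightarrow> \<not> nbr g y z \<Longrightarrow>
  \<not> (\<exists>m. nbr g y m \<and> nbr g m z) \<Longrightarrow> 4 \<le> length xs"
  apply (cases xs, simp)
  apply (rename_tac a l, case_tac l, simp)
  apply (rename_tac a l b l2, case_tac l2, simp add: gpath_Cons2)
  apply (rename_tac a l b l2 c l3, case_tac l3, auto simp: gpath_Cons2)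
  done


lemma gdist_eq:
  assumes "gpath g xs y z" "length xs = Suc d" "\<forall>ys. gpath g ys y z \<longrightarrow> Suc d \<le> length ys"
  shows "gdist g y z = d"
  unfolding gdist_def
proof (rule Least_equality)
  show "\<exists>xs. gpath g xs y z \<and> length xs = Suc d" using assms by blast
next
  fix k assume "\<exists>xs. gpath g xs y z \<and> length xs = Suc k"
  then show "d \<le> k" using assms(3) by force
qed

lemma gdist_path:
  assumes "joined g y z"
  shows "\<exists>xs. gpath g xs y z \<and> length xs = Suc (gdist g y z)"
proof -
  obtain xs where "gpath g xs y z" using assms unfolding joined_def by blast
  then have "\<exists>k xs. gpath g xs y z \<and> length xs = Suc k"
    by (intro exI[of _ "length xs - 1"] exI[of _ xs]) (cases xs, auto)
  then show ?thesis unfolding gdist_def by (rule LeastI_ex)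
qed

lemma gdist_le:
  assumes "gpath g xs y z" "length xs = Suc k"
  shows "gdist g y z \<le> k"
  unfolding gdist_def by (rule Least_le) (use assms in blast)

lemma gdist_ge:
  assumes "joined g y z" "\<forall>xs. gpath g xs y z \<longrightarrow> Suc d \<le> length xs"
  shows "d \<le> gdist g y z"
  using gdist_path[OF assms(1)] assms(2) by force

lemma gdist_self: "gdist g y y = 0"
  using gdist_le[of g "[y]" y y 0] by simp

lemma joined_self: "joined g y y"
  unfolding joined_def by (rule exI[of _ "[y]"]) simp

lemma gdist_ge1: "joined g y z \<Longrightarrow> y \<noteq> z \<Longrightarrow> 1 \<le> gdist g y z"
proof -
  assume a: "joined g y z" "y \<noteq> z"
  have "\<forall>xs. gpath g xs y z \<longrightarrow> Suc 1 \<le> length xs"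
    using gpath_len2[of g _ y z] a(2) by (simp add: eval_nat_numeral)
  then show ?thesis using gdist_ge[OF a(1)] by blast
qed

lemma gdist_ge2: "joined g y z \<Longrightarrow> y \<noteq> z \<Longrightarrow> \<not> nbr g y z \<Longrightarrow> 2 \<le> gdist g y z"
proof -
  assume a: "joined g y z" "y \<noteq> z" "\<not> nbr g y z"
  have "\<forall>xs. gpath g xs y z \<longrightarrow> Suc 2 \<le> length xs"
    using gpath_len3[of g _ y z] a(2,3) by (simp add: eval_nat_numeral)
  then show ?thesis using gdist_ge[OF a(1)] by blast
qed

lemma gdist_ge3: "joined g y z \<Longrightarrow> y \<noteq> z \<Longrightarrow> \<not> nbr g y z \<Longrightarrow>
   \<not> (\<exists>m. nbr g y m \<and> nbr g m z) \<Longrightarrow> 3 \<le> gdist g y z"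
proof -
  assume a: "joined g y z" "y \<noteq> z" "\<not> nbr g y z" "\<not> (\<exists>m. nbr g y m \<and> nbr g m z)"
  have "\<forall>xs. gpath g xs y z \<longrightarrow> Suc 3 \<le> length xs"
    using gpath_len4[of g _ y z] a(2,3,4) by (simp add: eval_nat_numeral)
  then show ?thesis using gdist_ge[OF a(1)] by blast
qed

lemma path2: "nbr g y z \<Longrightarrow> gpath g [y, z] y z"
  by (auto simp: gpath_Cons2 nbr_def)

lemma path3: "nbr g y m \<Longrightarrow> nbr g m z \<Longrightarrow> y \<noteq> z \<Longrightarrow> gpath g [y, m, z] y z"
  by (auto simp: gpath_Cons2 nbr_def)

lemma path4: "nbr g y m1 \<Longrightarrow> nbr g m1 m2 \<Longrightarrow> nbr g m2 z \<Longrightarrow> y \<noteq> z \<Longrightarrow> y \<noteq> m2 \<Longrightarrow> m1 \<noteq> z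
   \<Longrightarrow> gpath g [y, m1, m2, z] y z"
  by (auto simp: gpath_Cons2 nbr_def)

lemma joinedI: "gpath g xs y z \<Longrightarrow> joined g y z"
  unfolding joined_def by blast

lemma gdist1: "nbr g y z \<Longrightarrow> gdist g y z = 1"
proof -
  assume h: "nbr g y z"
  then have "y \<noteq> z" by (simp add: nbr_def)
  have "\<forall>ys. gpath g ys y z \<longrightarrow> Suc 1 \<le> length ys"
    using gpath_len2[of g _ y z] \<open>y \<noteq> z\<close> by (simp add: eval_nat_numeral)
  then show ?thesis using gdist_eq[OF path2[OF h], of 1] by simp
qed

lemma gdist2: "y \<noteq> z \<Longrightarrow> \<not> nbr g y z \<Longrightarrow> nbr g y m \<Longrightarrow> nbr g m z \<Longrightarrow> gdist g y z = 2"
proof -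
  assume a: "y \<noteq> z" "\<not> nbr g y z" "nbr g y m" "nbr g m z"
  have "\<forall>ys. gpath g ys y z \<longrightarrow> Suc 2 \<le> length ys"
    using gpath_len3[of g _ y z] a by (simp add: eval_nat_numeral)
  then show ?thesis using gdist_eq[OF path3[OF a(3,4,1)], of 2] by (simp add: eval_nat_numeral)
qed

lemma gdist3: "y \<noteq> z \<Longrightarrow> \<not> nbr g y z \<Longrightarrow> \<not> (\<exists>m. nbr g y m \<and> nbr g m z) \<Longrightarrow>
   nbr g y m1 \<Longrightarrow> nbr g m1 m2 \<Longrightarrow> nbr g m2 z \<Longrightarrow> gdist g y z = 3"
proof -
  assume a: "y \<noteq> z" "\<not> nbr g y z" "\<not> (\<exists>m. nbr g y m \<and> nbr g m z)"
    "nbr g y m1" "nbr g m1 m2" "nbr g m2 z"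
  have "y \<noteq> m2" using a(2,6) by blast
  have "m1 \<noteq> z" using a(2,4) by blast
  have "\<forall>ys. gpath g ys y z \<longrightarrow> Suc 3 \<le> length ys"
    using gpath_len4[of g _ y z] a by (simp add: eval_nat_numeral)
  then show ?thesis using gdist_eq[OF path4[OF a(4,5,6,1) \<open>y \<noteq> m2\<close> \<open>m1 \<noteq> z\<close>], of 3]
    by (simp add: eval_nat_numeral)
qed

lemma gdist1_iff: "joined g y z \<Longrightarrow> y \<noteq> z \<Longrightarrow> gdist g y z = 1 \<longleftrightarrow> nbr g y z"
proof -
  assume a: "joined g y z" "y \<noteq> z"
  show ?thesis
  proof
    assume "gdist g y z = 1"
    then show "nbr g y z" using gdist_ge2[OF a] by (cases "nbr g y z") auto
  qed (rule gdist1)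
qed

lemma gdist_mono: "g \<subseteq> g' \<Longrightarrow> joined g y z \<Longrightarrow> gdist g' y z \<le> gdist g y z"
proof -
  assume a: "g \<subseteq> g'" "joined g y z"
  obtain xs where "gpath g xs y z" "length xs = Suc (gdist g y z)" using gdist_path[OF a(2)] by blast
  then show ?thesis using gdist_le[of g' xs y z] gpath_subset[OF _ a(1)] by blast
qed

lemma joined_mono: "g \<subseteq> g' \<Longrightarrow> joined g y z \<Longrightarrow> joined g' y z"
  unfolding joined_def using gpath_subset by blast

lemma ess_avoid: "gpath g xs y z \<Longrightarrow> v \<notin> set xs \<Longrightarrow> v \<notin> ess N g y z"
  unfolding ess_def by blast

lemma ess_cut: "v \<in> N \<Longrightarrow> v \<noteq> y \<Longrightarrow> v \<noteq> z \<Longrightarrow> y \<in> C \<Longrightarrow> z \<notin> C \<Longrightarrow> v \<notin> C \<Longrightarrow>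
   \<forall>a\<in>C. \<forall>b'. nbr g a b' \<longrightarrow> b' \<in> C \<or> b' = v \<Longrightarrow> v \<in> ess N g y z"
  unfolding ess_def using gpath_cut[of y C z v g] by blast

lemma ess_mono: "g \<subseteq> g' \<Longrightarrow> ess N g' y z \<subseteq> ess N g y z"
  unfolding ess_def using gpath_subset by blast

lemma ess_nbr: "nbr g y z \<Longrightarrow> ess N g y z = {}"
  unfolding ess_def using path2[of g y z] by auto

lemma ess_self: "ess N g y y = {}"
  unfolding ess_def by (auto intro: exI[of _ "[y]"])

lemma ess_sym1: "v \<in> ess N g y z \<Longrightarrow> v \<in> ess N g z y"
proof -
  assume a: "v \<in> ess N g y z"
  have "v \<in> set xs" if "gpath g xs z y" for xs
    using a gpath_rev[OF that] unfolding ess_def by auto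
  then show ?thesis using a unfolding ess_def by auto
qed

lemma ess_sym: "ess N g y z = ess N g z y"
  using ess_sym1 by blast

lemma gdist_sym_le: "joined g y z \<Longrightarrow> gdist g z y \<le> gdist g y z"
proof -
  assume a: "joined g y z"
  obtain xs where "gpath g xs y z" "length xs = Suc (gdist g y z)" using gdist_path[OF a] by blast
  then have "gpath g (rev xs) z y" "length (rev xs) = Suc (gdist g y z)" using gpath_rev[of g xs y z] by simp_all
  then show ?thesis by (rule gdist_le)
qed

lemma joined_sym1: "joined g y z \<Longrightarrow> joined g z y"
  unfolding joined_def by (blast intro: gpath_rev)

lemma joined_sym: "joined g y z \<longleftrightarrow> joined g z y"
  using joined_sym1 by blast

lemma gdist_sym: "gdist g y z = gdist g z y"
proof (cases "joined g y z")
  case True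
  then have "joined g z y" using joined_sym by blast
  then show ?thesis using gdist_sym_le[of g y z] gdist_sym_le[of g z y] True by linarith
next
  case False
  then have "\<not> joined g z y" using joined_sym by blast
  have e1: "\<And>k. \<not> (\<exists>xs. gpath g xs y z \<and> length xs = Suc k)" using False unfolding joined_def by blast
  have e2: "\<And>k. \<not> (\<exists>xs. gpath g xs z y \<and> length xs = Suc k)" using \<open>\<not> joined g z y\<close> unfolding joined_def by blast
  have "(\<lambda>k. \<exists>xs. gpath g xs y z \<and> length xs = Suc k) = (\<lambda>k. \<exists>xs. gpath g xs z y \<and> length xs = Suc k)"
    by (intro ext) (use e1 e2 in blast)
  then show ?thesis unfolding gdist_def by simp
qed

lemma ess_sub: "ess N g y z \<subseteq> N"
  unfolding ess_def by auto

lemma ess_finite: "finite N \<Longrightarrow> finite (ess N g y z)"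
  by (rule finite_subset[OF ess_sub])

lemma ess_single:
  assumes "v \<in> ess N g y z" "\<forall>w. w \<noteq> v \<longrightarrow> w \<notin> ess N g y z"
  shows "ess N g y z = {v}"
  using assms by auto


definition val :: "(nat \<Rightarrow> real) \<Rightarrow> real \<Rightarrow> nat set \<Rightarrow> network \<Rightarrow> nat \<Rightarrow> nat \<Rightarrow> real" where
  "val b gam N g j w = (if joined g j w then b (gdist g j w) * (if ess N g j w = {} then 1 else 1 - gam) else 0)"

definition iterm :: "(nat \<Rightarrow> real) \<Rightarrow> real \<Rightarrow> nat set \<Rightarrow> network \<Rightarrow> nat \<Rightarrow> nat \<times> nat \<Rightarrow> real" where
  "iterm b gam N g j q = (if joined g (fst q) (snd q) \<and> j \<in> ess N g (fst q) (snd q)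
      then gam / real (card (ess N g (fst q) (snd q))) * 2 * b (gdist g (fst q) (snd q)) else 0)"

definition PR :: "nat set \<Rightarrow> (nat \<times> nat) set" where
  "PR N = {q. fst q \<in> N \<and> snd q \<in> N \<and> fst q < snd q}"

definition edges_in :: "nat set \<Rightarrow> network \<Rightarrow> bool" where
  "edges_in N g \<longleftrightarrow> (\<forall>a b. nbr g a b \<longrightarrow> a \<in> N \<and> b \<in> N)"

lemma PR_finite: "finite N \<Longrightarrow> finite (PR N)"
proof -
  assume "finite N"
  have "PR N \<subseteq> N \<times> N" unfolding PR_def by auto
  then show ?thesis using \<open>finite N\<close> finite_subset by blast
qed

lemma nbr_irrefl: "\<not> nbr g j j"
  unfolding nbr_def by simp

lemma nbr_joined: "nbr g y z \<Longrightarrow> joined g y z"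
  using joinedI path2 by metis

lemma degree_N:
  assumes "edges_in N g" "j \<in> N"
  shows "degree g j = card {w \<in> N - {j}. nbr g j w}"
proof -
  have "{k. nbr g j k} = {w \<in> N - {j}. nbr g j w}"
    using assms unfolding edges_in_def nbr_def by auto
  then show ?thesis unfolding degree_def by simp
qed

lemma util_decomp:
  assumes fin: "finite N" and jN: "j \<in> N" and E: "edges_in N g"
  shows "util b c gam N g j = (\<Sum>w\<in>N-{j}. val b gam N g j w) - c * real (degree g j)
           + (\<Sum>q\<in>PR N. iterm b gam N g j q)"
proof -
  let ?M = "N - {j}"
  have finM: "finite ?M" using fin by simp
  have s1: "(\<Sum>w \<in> {w \<in> N. joined g j w \<and> gdist g j w > 1}. b (gdist g j w))
      = (\<Sum>w\<in>?M. if joined g j w \<and> \<not> nbr g j w then b (gdist g j w) else 0)"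
  proof -
    have "{w \<in> N. joined g j w \<and> gdist g j w > 1} = {w \<in> ?M. joined g j w \<and> \<not> nbr g j w}"
    proof (intro set_eqI iffI)
      fix w assume "w \<in> {w \<in> N. joined g j w \<and> gdist g j w > 1}"
      then have "w \<in> N" "joined g j w" "gdist g j w > 1" by auto
      moreover have "w \<noteq> j" using \<open>gdist g j w > 1\<close> gdist_self by (metis less_numeral_extra(4) not_one_less_zero)
      moreover have "\<not> nbr g j w" using \<open>gdist g j w > 1\<close> gdist1 by fastforce
      ultimately show "w \<in> {w \<in> ?M. joined g j w \<and> \<not> nbr g j w}" by auto
    next
      fix w assume "w \<in> {w \<in> ?M. joined g j w \<and> \<not> nbr g j w}"
      then have "w \<in> N" "w \<noteq> j" "joined g j w" "\<not> nbr g j w" by auto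
      then show "w \<in> {w \<in> N. joined g j w \<and> gdist g j w > 1}" using gdist_ge2[of g j w] by auto
    qed
    then show ?thesis using sum.inter_filter[OF finM, of "\<lambda>w. b (gdist g j w)"] by simp
  qed
  have s2: "(\<Sum>w \<in> {w \<in> N. joined g j w \<and> ess N g j w \<noteq> {}}. gam * b (gdist g j w))
      = (\<Sum>w\<in>?M. if joined g j w \<and> ess N g j w \<noteq> {} then gam * b (gdist g j w) else 0)"
  proof -
    have "{w \<in> N. joined g j w \<and> ess N g j w \<noteq> {}} = {w \<in> ?M. joined g j w \<and> ess N g j w \<noteq> {}}"
      using ess_self by auto
    then show ?thesis using sum.inter_filter[OF finM, of "\<lambda>w. gam * b (gdist g j w)"] by simp
  qed
  have s3: "real (degree g j) * (b 1 - c) = (\<Sum>w\<in>?M. if nbr g j w then b 1 else 0) - c * real (degree g j)"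
  proof -
    have "(\<Sum>w\<in>?M. if nbr g j w then b 1 else 0) = real (card {w \<in> ?M. nbr g j w}) * b 1"
      using sum.inter_filter[OF finM, of "\<lambda>w. b 1" "nbr g j"] by simp
    then show ?thesis using degree_N[OF E jN] by (simp add: algebra_simps)
  qed
  have s4: "(\<Sum>(y, z) \<in> {(y, z). y \<in> N \<and> z \<in> N \<and> y < z \<and> joined g y z \<and> j \<in> ess N g y z}.
          gam / real (card (ess N g y z)) * 2 * b (gdist g y z)) = (\<Sum>q\<in>PR N. iterm b gam N g j q)"
  proof -
    have eq: "{(y, z). y \<in> N \<and> z \<in> N \<and> y < z \<and> joined g y z \<and> j \<in> ess N g y z}
       = {q \<in> PR N. joined g (fst q) (snd q) \<and> j \<in> ess N g (fst q) (snd q)}"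
      unfolding PR_def by auto
    have "(\<Sum>q\<in>PR N. iterm b gam N g j q) = (\<Sum>q\<in>{q \<in> PR N. joined g (fst q) (snd q) \<and> j \<in> ess N g (fst q) (snd q)}.
        gam / real (card (ess N g (fst q) (snd q))) * 2 * b (gdist g (fst q) (snd q)))"
      unfolding iterm_def by (rule sum.inter_filter[OF PR_finite[OF fin], symmetric])
    also have "\<dots> = (\<Sum>(y, z) \<in> {(y, z). y \<in> N \<and> z \<in> N \<and> y < z \<and> joined g y z \<and> j \<in> ess N g y z}.
          gam / real (card (ess N g y z)) * 2 * b (gdist g y z))"
      unfolding eq by (intro sum.cong) auto
    finally show ?thesis by simp
  qed
  have s5: "(\<Sum>w\<in>?M. val b gam N g j w) = (\<Sum>w\<in>?M. if nbr g j w then b 1 else 0)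
     + (\<Sum>w\<in>?M. if joined g j w \<and> \<not> nbr g j w then b (gdist g j w) else 0)
     - (\<Sum>w\<in>?M. if joined g j w \<and> ess N g j w \<noteq> {} then gam * b (gdist g j w) else 0)"
  proof -
    have "val b gam N g j w = (if nbr g j w then b 1 else 0)
      + (if joined g j w \<and> \<not> nbr g j w then b (gdist g j w) else 0)
      - (if joined g j w \<and> ess N g j w \<noteq> {} then gam * b (gdist g j w) else 0)" for w
    proof (cases "nbr g j w")
      case True
      then show ?thesis using gdist1[OF True] ess_nbr[OF True] nbr_joined[OF True] unfolding val_def by simp
    next
      case False
      then show ?thesis unfolding val_def by (simp add: algebra_simps)
    qed
    then show ?thesis by (simp add: sum.distrib sum_subtractf)
  qed
  show ?thesis unfolding util_def using s1 s2 s3 s4 s5 by simp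
qed


locale prm =
  fixes b :: "nat \<Rightarrow> real" and gam :: real
  assumes b_pos: "\<forall>i \<ge> 1. 0 < b i"
    and b_dec: "\<forall>i \<ge> 1. b (Suc i) < b i"
    and gam_nonneg: "0 \<le> gam" and gam_lt1: "gam < 1"
begin

lemma b_anti: "1 \<le> m \<Longrightarrow> m \<le> n \<Longrightarrow> b n \<le> b m"
proof (induction n)
  case 0 then show ?case by simp
next
  case (Suc n)
  show ?case
  proof (cases "m = Suc n")
    case True then show ?thesis by simp
  next
    case False
    then have "m \<le> n" using Suc by simp
    then have "b n \<le> b m" using Suc by simp
    moreover have "b (Suc n) < b n" using b_dec \<open>m \<le> n\<close> Suc by auto
    ultimately show ?thesis by simp
  qed
qed

lemma b_pos': "1 \<le> i \<Longrightarrow> 0 < b i"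
  using b_pos by simp

lemma val_nonneg: "w \<noteq> j \<Longrightarrow> 0 \<le> val b gam N g j w"
proof (cases "joined g j w")
  case True
  assume "w \<noteq> j"
  then have "1 \<le> gdist g j w" using gdist_ge1[OF True] by simp
  then have "0 < b (gdist g j w)" by (rule b_pos')
  moreover have "0 \<le> (if ess N g j w = {} then 1 else (1::real) - gam)" using gam_lt1 by simp
  ultimately show ?thesis unfolding val_def using True by simp
next
  case False
  then show ?thesis unfolding val_def by simp
qed

lemma val_le_b: "w \<noteq> j \<Longrightarrow> joined g j w \<Longrightarrow> val b gam N g j w \<le> b (gdist g j w)"
proof -
  assume a: "w \<noteq> j" "joined g j w"
  have "0 < b (gdist g j w)" using gdist_ge1[of g j w] a b_pos' by auto
  then show ?thesis unfolding val_def using a gam_nonneg by auto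
qed

lemma val_nbr: "nbr g j w \<Longrightarrow> val b gam N g j w = b 1"
  unfolding val_def using nbr_joined gdist1 ess_nbr by simp

lemma iterm_nonneg: "0 \<le> iterm b gam N g j q"
proof -
  { assume c: "joined g (fst q) (snd q)" "j \<in> ess N g (fst q) (snd q)"
    then have "fst q \<noteq> snd q" using ess_self by fastforce
    then have "0 < b (gdist g (fst q) (snd q))" using gdist_ge1 c b_pos' by auto
    then have "0 \<le> gam / real (card (ess N g (fst q) (snd q))) * 2 * b (gdist g (fst q) (snd q))"
      using gam_nonneg by auto }
  then show ?thesis unfolding iterm_def by auto
qed

lemma val_mono:
  assumes "g' \<subseteq> g" "w \<noteq> j"
  shows "val b gam N g' j w \<le> val b gam N g j w"
proof (cases "joined g' j w")
  case True
  have jg: "joined g j w" using joined_mono[OF assms(1) True] .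
  have d: "gdist g j w \<le> gdist g' j w" using gdist_mono[OF assms(1) True] .
  have d1: "1 \<le> gdist g j w" using gdist_ge1[OF jg] assms(2) by auto
  have bb: "b (gdist g' j w) \<le> b (gdist g j w)" using b_anti[OF d1 d] .
  have e: "ess N g j w \<subseteq> ess N g' j w" using ess_mono[OF assms(1)] .
  have f: "(if ess N g' j w = {} then 1 else 1 - gam) \<le> (if ess N g j w = {} then 1 else (1::real) - gam)"
    using e gam_nonneg by auto
  have "0 < b (gdist g j w)" using d1 by (rule b_pos')
  moreover have "0 \<le> (if ess N g' j w = {} then 1 else (1::real) - gam)" using gam_lt1 by simp
  ultimately have "b (gdist g' j w) * (if ess N g' j w = {} then 1 else 1 - gam)
     \<le> b (gdist g j w) * (if ess N g j w = {} then 1 else 1 - gam)"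
    by (intro mult_mono[OF bb f]) simp_all
  then show ?thesis unfolding val_def using True jg by simp
next
  case False
  then have "val b gam N g' j w = 0" unfolding val_def by simp
  then show ?thesis using val_nonneg[OF assms(2)] by simp
qed

lemma gpath_avoid_del:
  assumes gp: "gpath g xs y z" and j: "j \<notin> set xs"
  shows "gpath (g - {{j, k}}) xs y z"
proof -
  have "nbr (g - {{j, k}}) (xs ! i) (xs ! Suc i)" if "Suc i < length xs" for i
  proof -
    have n: "nbr g (xs ! i) (xs ! Suc i)" using gp that unfolding gpath_def by blast
    have "xs ! i \<in> set xs" "xs ! Suc i \<in> set xs" using that by simp_all
    then have "xs ! i \<noteq> j" "xs ! Suc i \<noteq> j" using j by auto
    then have "{xs ! i, xs ! Suc i} \<noteq> {j, k}" by (metis doubleton_eq_iff)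
    then show ?thesis using n unfolding nbr_def by auto
  qed
  then show ?thesis using gp unfolding gpath_def by blast
qed

lemma ess_del_keep:
  assumes "j \<in> ess N (g - {{j, k}}) y z"
  shows "j \<in> ess N g y z"
proof -
  have "j \<in> set xs" if "gpath g xs y z" for xs
    using gpath_avoid_del[OF that, of j k] assms unfolding ess_def by blast
  then show ?thesis using assms unfolding ess_def by blast
qed

lemma iterm_del:
  assumes fin: "finite N"
  shows "iterm b gam N (g - {{j, k}}) j q \<le> iterm b gam N g j q"
proof (cases "joined (g - {{j, k}}) (fst q) (snd q) \<and> j \<in> ess N (g - {{j, k}}) (fst q) (snd q)")
  case True
  let ?g' = "g - {{j, k}}" and ?y = "fst q" and ?z = "snd q"
  have sub: "?g' \<subseteq> g" by auto
  have jg: "joined g ?y ?z" using joined_mono[OF sub] True by blast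
  have je: "j \<in> ess N g ?y ?z" using ess_del_keep True by blast
  have yz: "?y \<noteq> ?z" using je ess_self by fastforce
  have d: "gdist g ?y ?z \<le> gdist ?g' ?y ?z" using gdist_mono[OF sub] True by blast
  have d1: "1 \<le> gdist g ?y ?z" using gdist_ge1[OF jg yz] .
  have bb: "b (gdist ?g' ?y ?z) \<le> b (gdist g ?y ?z)" using b_anti[OF d1 d] .
  have bp: "0 < b (gdist ?g' ?y ?z)" using b_pos' d1 d by auto
  have e: "card (ess N g ?y ?z) \<le> card (ess N ?g' ?y ?z)"
    using ess_mono[OF sub] ess_finite[OF fin] by (simp add: card_mono)
  have e1: "0 < card (ess N g ?y ?z)" using je ess_finite[OF fin] card_gt_0_iff by blast
  have "gam / real (card (ess N ?g' ?y ?z)) \<le> gam / real (card (ess N g ?y ?z))"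
    using e e1 gam_nonneg by (simp add: divide_left_mono)
  moreover have "0 \<le> gam / real (card (ess N ?g' ?y ?z))" using gam_nonneg by simp
  moreover have "0 \<le> gam / real (card (ess N g ?y ?z)) * 2" using gam_nonneg by simp
  ultimately have "gam / real (card (ess N ?g' ?y ?z)) * 2 * b (gdist ?g' ?y ?z)
     \<le> gam / real (card (ess N g ?y ?z)) * 2 * b (gdist g ?y ?z)"
    using bb bp by (intro mult_mono) (auto simp del: times_divide_eq_left)
  then show ?thesis unfolding iterm_def using True jg je by simp
next
  case False
  have "iterm b gam N (g - {{j, k}}) j q = 0" unfolding iterm_def by (rule if_not_P[OF False])
  then show ?thesis using iterm_nonneg[of N g j q] by simp
qed

lemma util_del:
  assumes fin: "finite N" and iN: "i \<in> N" and E: "edges_in N g" and ik: "nbr g i k"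
  shows "util b c gam N (g - {{i, k}}) i \<le> util b c gam N g i - (b 1 - c) + val b gam N (g - {{i, k}}) i k"
proof -
  let ?g' = "g - {{i, k}}"
  have sub: "?g' \<subseteq> g" by auto
  have E': "edges_in N ?g'" using E unfolding edges_in_def nbr_def by auto
  have kN: "k \<in> N" using E ik unfolding edges_in_def by blast
  have ki: "k \<noteq> i" using ik nbr_def by auto
  have "{m. nbr ?g' i m} = {m. nbr g i m} - {k}"
    unfolding nbr_def by (auto simp: doubleton_eq_iff)
  moreover have "finite {m. nbr g i m}"
    using E fin unfolding edges_in_def by (metis (no_types, lifting) finite_subset mem_Collect_eq subsetI)
  ultimately have deg: "degree ?g' i = degree g i - 1" "1 \<le> degree g i"
    unfolding degree_def using ik by (auto simp: card_Diff_singleton card_gt_0_iff Suc_le_eq)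
  then have degr: "real (degree ?g' i) = real (degree g i) - 1" by simp
  have fM: "finite (N - {i})" using fin by simp
  have kM: "k \<in> N - {i}" using kN ki by simp
  have v1: "(\<Sum>w\<in>N-{i}. val b gam N ?g' i w) = val b gam N ?g' i k + (\<Sum>w\<in>N-{i}-{k}. val b gam N ?g' i w)"
    using sum.remove[OF fM kM] by simp
  have v2: "(\<Sum>w\<in>N-{i}. val b gam N g i w) = b 1 + (\<Sum>w\<in>N-{i}-{k}. val b gam N g i w)"
    using sum.remove[OF fM kM, of "val b gam N g i"] val_nbr[OF ik, of N] by simp
  have v3: "(\<Sum>w\<in>N-{i}-{k}. val b gam N ?g' i w) \<le> (\<Sum>w\<in>N-{i}-{k}. val b gam N g i w)"
    by (rule sum_mono) (use val_mono[OF sub] in auto)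
  have it: "(\<Sum>q\<in>PR N. iterm b gam N ?g' i q) \<le> (\<Sum>q\<in>PR N. iterm b gam N g i q)"
    by (rule sum_mono) (rule iterm_del[OF fin])
  show ?thesis
    unfolding util_decomp[OF fin iN E] util_decomp[OF fin iN E'] degr
    using v1 v2 v3 it by (simp add: algebra_simps)
qed

lemma util_add_lb:
  assumes fin: "finite N" and iN: "i \<in> N" and kN: "k \<in> N" and ik: "i \<noteq> k"
    and ng: "{i, k} \<notin> g" and E: "edges_in N g"
  shows "util b c gam N g i \<le> util b c gam N (insert {i, k} g) i - (b 1 - c) + val b gam N g i k"
proof -
  have E': "edges_in N (insert {i, k} g)" using E iN kN unfolding edges_in_def nbr_def
    by (auto simp: doubleton_eq_iff)
  have nb: "nbr (insert {i, k} g) i k" using ik unfolding nbr_def by simp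
  have eq: "insert {i, k} g - {{i, k}} = g" using ng by auto
  show ?thesis using util_del[OF fin iN E' nb] unfolding eq .
qed

definition bip :: "(nat \<Rightarrow> bool) \<Rightarrow> network \<Rightarrow> bool" where
  "bip s g \<longleftrightarrow> (\<forall>a b. nbr g a b \<longrightarrow> s a \<noteq> s b)"

lemma util_del_bip:
  assumes fin: "finite N" and iN: "i \<in> N" and E: "edges_in N g" and ik: "nbr g i k"
    and B: "bip s g" and cb: "c < b 1 - b 3"
  shows "util b c gam N (g - {{i, k}}) i < util b c gam N g i"
proof -
  let ?g' = "g - {{i, k}}"
  have ki: "k \<noteq> i" using ik nbr_def by auto
  have "val b gam N ?g' i k \<le> b 3"
  proof (cases "joined ?g' i k")
    case True
    have nn: "\<not> nbr ?g' i k" unfolding nbr_def by auto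
    have nc: "\<not> (\<exists>m. nbr ?g' i m \<and> nbr ?g' m k)"
    proof
      assume "\<exists>m. nbr ?g' i m \<and> nbr ?g' m k"
      then obtain m where "nbr g i m" "nbr g m k" unfolding nbr_def by auto
      then show False using B ik unfolding bip_def by metis
    qed
    have "3 \<le> gdist ?g' i k" using gdist_ge3[OF True ki[symmetric] nn nc] .
    then have "b (gdist ?g' i k) \<le> b 3" using b_anti by simp
    then show ?thesis using val_le_b[OF ki True, of N] by simp
  next
    case False
    then show ?thesis unfolding val_def using b_pos'[of 3] by simp
  qed
  then show ?thesis using util_del[OF fin iN E ik, where c=c] cb by simp
qed

end


lemma nbr_ins: "nbr (insert {p, k} g) a b \<longleftrightarrow> nbr g a b \<or> (a = p \<and> b = k \<and> p \<noteq> k) \<or> (a = k \<and> b = p \<and> p \<noteq> k)"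
  unfolding nbr_def by (auto simp: doubleton_eq_iff)

lemma edges_in_ins: "edges_in N g \<Longrightarrow> p \<in> N \<Longrightarrow> k \<in> N \<Longrightarrow> edges_in N (insert {p, k} g)"
  unfolding edges_in_def nbr_ins by blast

context prm
begin

lemma degree_ins:
  assumes fin: "finite N" and E: "edges_in N g" and pN: "p \<in> N" and kN: "k \<in> N" and pk: "p \<noteq> k"
    and ng: "{p, k} \<notin> g"
  shows "degree (insert {p, k} g) p = Suc (degree g p)"
proof -
  have "{m. nbr (insert {p, k} g) p m} = insert k {m. nbr g p m}"
    unfolding nbr_ins using pk by auto
  moreover have "k \<notin> {m. nbr g p m}" using ng unfolding nbr_def by simp
  moreover have "finite {m. nbr g p m}"
  proof -
    have "{m. nbr g p m} \<subseteq> N" using E unfolding edges_in_def by blast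
    then show ?thesis using fin finite_subset by blast
  qed
  ultimately show ?thesis unfolding degree_def by simp
qed

lemma util_add_diff:
  assumes fin: "finite N" and E: "edges_in N g" and pN: "p \<in> N" and kN: "k \<in> N" and pk: "p \<noteq> k"
    and ng: "{p, k} \<notin> g"
  shows "util b c gam N (insert {p, k} g) p - util b c gam N g p =
    (\<Sum>w\<in>N-{p}. val b gam N (insert {p, k} g) p w - val b gam N g p w) - c
    + (\<Sum>q\<in>PR N. iterm b gam N (insert {p, k} g) p q - iterm b gam N g p q)"
proof -
  have E': "edges_in N (insert {p, k} g)" by (rule edges_in_ins[OF E pN kN])
  show ?thesis
    unfolding util_decomp[OF fin pN E] util_decomp[OF fin pN E'] degree_ins[OF fin E pN kN pk ng]
    by (simp add: sum_subtractf algebra_simps)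
qed

lemma sum_single_le:
  fixes f :: "nat \<Rightarrow> real"
  assumes "finite A" "\<forall>w\<in>A. w \<noteq> ww \<longrightarrow> f w \<le> 0" "\<forall>w\<in>A. w = ww \<longrightarrow> f w \<le> B" "0 \<le> B"
  shows "(\<Sum>w\<in>A. f w) \<le> B"
proof (cases "ww \<in> A")
  case True
  have "(\<Sum>w\<in>A. f w) = f ww + (\<Sum>w\<in>A-{ww}. f w)" using sum.remove[OF assms(1) True] by simp
  moreover have "(\<Sum>w\<in>A-{ww}. f w) \<le> 0" using assms(2) by (intro sum_nonpos) auto
  ultimately show ?thesis using assms(3) True by simp
next
  case False
  then have "(\<Sum>w\<in>A. f w) \<le> 0" using assms(2) by (intro sum_nonpos) auto
  then show ?thesis using assms(4) by simp
qed

lemma gen_bound: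
  assumes fin: "finite N" and E: "edges_in N g" and pN: "p \<in> N" and kN: "k \<in> N" and pk: "p \<noteq> k"
    and ng: "{p, k} \<notin> g"
    and cn: "nbr g p m" "nbr g m k"
    and nc: "\<forall>y\<in>N. \<forall>z\<in>N. p \<notin> ess N g y z"
    and dp: "\<forall>w\<in>N-{p,k}. joined g p w \<and> gdist (insert {p, k} g) p w = gdist g p w"
    and es: "\<forall>w\<in>N-{p}. ess N g p w \<noteq> {} \<longrightarrow> w = ww \<and> 2 \<le> gdist g p ww"
  shows "util b c gam N (insert {p, k} g) p - util b c gam N g p \<le> b 1 - c - b 2 + gam * b 2"
proof -
  let ?g = "insert {p, k} g"
  have sub: "g \<subseteq> ?g" by auto
  have it: "(\<Sum>q\<in>PR N. iterm b gam N ?g p q - iterm b gam N g p q) \<le> 0"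
  proof (rule sum_nonpos)
    fix q assume q: "q \<in> PR N"
    have "p \<notin> ess N ?g (fst q) (snd q)" using nc ess_mono[OF sub] q unfolding PR_def by blast
    then have "iterm b gam N ?g p q = 0" unfolding iterm_def by simp
    then show "iterm b gam N ?g p q - iterm b gam N g p q \<le> 0" using iterm_nonneg[of N g p q] by simp
  qed
  have fM: "finite (N - {p})" using fin by simp
  have kM: "k \<in> N - {p}" using kN pk by simp
  have nbk: "\<not> nbr g p k" using ng unfolding nbr_def by simp
  have dk: "gdist g p k = 2" using gdist2[OF pk nbk cn] .
  have jk: "joined g p k" using joinedI[OF path3[OF cn pk]] .
  have valk: "val b gam N g p k = b 2 * (if ess N g p k = {} then 1 else 1 - gam)"
    unfolding val_def using jk dk by simp
  have valk': "val b gam N ?g p k = b 1" by (rule val_nbr) (use pk in \<open>simp add: nbr_ins\<close>)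
  define B where "B = (if ww = k then 0 else gam * b 2)"
  have B0: "0 \<le> B" unfolding B_def using gam_nonneg b_pos'[of 2] by simp
  have rest: "(\<Sum>w\<in>N-{p}-{k}. val b gam N ?g p w - val b gam N g p w) \<le> B"
  proof (rule sum_single_le[where ww = ww])
    show "finite (N - {p} - {k})" using fin by simp
    show "0 \<le> B" by (rule B0)
  next
    show "\<forall>w\<in>N - {p} - {k}. w \<noteq> ww \<longrightarrow> val b gam N ?g p w - val b gam N g p w \<le> 0"
    proof (intro ballI impI)
      fix w assume w: "w \<in> N - {p} - {k}" "w \<noteq> ww"
      then have "ess N g p w = {}" using es by blast
      moreover have "joined g p w" "gdist ?g p w = gdist g p w" using dp w by auto
      moreover have "ess N ?g p w = {}" using ess_mono[OF sub, of N p w] calculation(1) by blast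
      moreover have "joined ?g p w" using joined_mono[OF sub] calculation(2) by blast
      ultimately show "val b gam N ?g p w - val b gam N g p w \<le> 0" unfolding val_def by simp
    qed
  next
    show "\<forall>w\<in>N - {p} - {k}. w = ww \<longrightarrow> val b gam N ?g p w - val b gam N g p w \<le> B"
    proof (intro ballI impI)
      fix w assume w: "w \<in> N - {p} - {k}" "w = ww"
      have jw: "joined g p w" and dw: "gdist ?g p w = gdist g p w" using dp w by auto
      have wp: "w \<noteq> p" using w by simp
      have d1: "1 \<le> gdist g p w" using gdist_ge1[OF jw] wp by simp
      have bp: "0 < b (gdist g p w)" using d1 by (rule b_pos')
      have v1: "val b gam N ?g p w \<le> b (gdist g p w)"
        using val_le_b[OF wp joined_mono[OF sub jw], of N] dw by simp
      show "val b gam N ?g p w - val b gam N g p w \<le> B"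
      proof (cases "ess N g p w = {}")
        case True
        then have "ess N ?g p w = {}" using ess_mono[OF sub, of N p w] by blast
        then have "val b gam N ?g p w = val b gam N g p w"
          unfolding val_def using jw joined_mono[OF sub jw] dw True by simp
        then show ?thesis using B0 by simp
      next
        case False
        then have "2 \<le> gdist g p ww" using es w by blast
        then have bb: "b (gdist g p w) \<le> b 2" using b_anti w by simp
        have "val b gam N g p w = b (gdist g p w) * (1 - gam)" unfolding val_def using jw False by simp
        then have "val b gam N ?g p w - val b gam N g p w \<le> gam * b (gdist g p w)"
          using v1 by (simp add: algebra_simps)
        also have "\<dots> \<le> gam * b 2" using bb gam_nonneg by (simp add: mult_left_mono)
        finally show ?thesis unfolding B_def using w by simp
      qed
    qed
  qed
  have split: "(\<Sum>w\<in>N-{p}. val b gam N ?g p w - val b gam N g p w)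
     = (val b gam N ?g p k - val b gam N g p k) + (\<Sum>w\<in>N-{p}-{k}. val b gam N ?g p w - val b gam N g p w)"
    using sum.remove[OF fM kM] by simp
  have kpart: "val b gam N ?g p k - val b gam N g p k + B \<le> b 1 - b 2 + gam * b 2"
  proof (cases "ess N g p k = {}")
    case True
    then show ?thesis using valk valk' B_def gam_nonneg b_pos'[of 2] by auto
  next
    case False
    then have "ww = k" using es kM by blast
    then show ?thesis using valk valk' B_def False by (simp add: algebra_simps)
  qed
  show ?thesis
    unfolding util_add_diff[OF fin E pN kN pk ng] split using rest it kpart by linarith
qed

end


definition GS :: "nat set \<Rightarrow> nat set \<Rightarrow> nat \<Rightarrow> nat set \<Rightarrow> network" where
  "GS Y Z x S = {{a, bb} | a bb. a \<in> Y \<and> bb \<in> Z} \<union> {{x, s} | s. s \<in> S}"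

lemma two_elem: "finite Z \<Longrightarrow> 2 \<le> card Z \<Longrightarrow> \<exists>z\<in>Z. z \<noteq> v"
proof (rule ccontr)
  assume "finite Z" "2 \<le> card Z" "\<not> (\<exists>z\<in>Z. z \<noteq> v)"
  then have "Z \<subseteq> {v}" by auto
  then have "card Z \<le> 1" using card_mono[of "{v}" Z] by simp
  then show False using \<open>2 \<le> card Z\<close> by simp
qed

locale fam = prm +
  fixes Y Z :: "nat set" and x :: nat and N :: "nat set"
  assumes YZ: "Y \<inter> Z = {}" and xY: "x \<notin> Y" and xZ: "x \<notin> Z" and Ndef: "N = insert x (Y \<union> Z)"
    and finN: "finite N" and xmax: "\<forall>a\<in>Y \<union> Z. a < x"
begin

lemma finY: "finite Y" and finZ: "finite Z"
  using finN Ndef by auto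

lemma nbr_GS:
  assumes "S \<subseteq> Y"
  shows "nbr (GS Y Z x S) a bb \<longleftrightarrow> (a \<in> Y \<and> bb \<in> Z) \<or> (a \<in> Z \<and> bb \<in> Y) \<or> (a = x \<and> bb \<in> S) \<or> (a \<in> S \<and> bb = x)"
proof
  assume "nbr (GS Y Z x S) a bb"
  then have ab: "a \<noteq> bb" "{a, bb} \<in> GS Y Z x S" unfolding nbr_def by auto
  then show "(a \<in> Y \<and> bb \<in> Z) \<or> (a \<in> Z \<and> bb \<in> Y) \<or> (a = x \<and> bb \<in> S) \<or> (a \<in> S \<and> bb = x)"
    unfolding GS_def by (auto simp: doubleton_eq_iff)
next
  assume h: "(a \<in> Y \<and> bb \<in> Z) \<or> (a \<in> Z \<and> bb \<in> Y) \<or> (a = x \<and> bb \<in> S) \<or> (a \<in> S \<and> bb = x)"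
  then have "a \<noteq> bb" using YZ xY assms by auto
  moreover have "{a, bb} \<in> GS Y Z x S" using h unfolding GS_def by (auto simp: insert_commute)
  ultimately show "nbr (GS Y Z x S) a bb" unfolding nbr_def by simp
qed

lemma edges_GS: "S \<subseteq> Y \<Longrightarrow> edges_in N (GS Y Z x S)"
  unfolding edges_in_def using nbr_GS Ndef by auto

lemma bip_GS: "S \<subseteq> Y \<Longrightarrow> bip (\<lambda>a. a \<in> Y) (GS Y Z x S)"
  unfolding bip_def using nbr_GS YZ xY by auto

lemma GS_insert: "GS Y Z x (insert u S) = insert {x, u} (GS Y Z x S)"
  unfolding GS_def by auto

end

locale gen = fam +
  assumes cY: "2 \<le> card Y" and cZ: "2 \<le> card Z"
begin

lemma exZ: "\<exists>z\<in>Z. z \<noteq> v" using two_elem[OF finZ cZ] .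
lemma exY: "\<exists>y\<in>Y. y \<noteq> v" using two_elem[OF finY cY] .

lemma core_path:
  assumes SY: "S \<subseteq> Y" and a: "a \<in> Y \<union> Z" and bb: "bb \<in> Y \<union> Z" and ab: "a \<noteq> bb" and v: "v \<noteq> a" "v \<noteq> bb"
  shows "\<exists>xs. gpath (GS Y Z x S) xs a bb \<and> v \<notin> set xs"
proof -
  let ?g = "GS Y Z x S"
  note nb = nbr_GS[OF SY]
  consider "a \<in> Y" "bb \<in> Z" | "a \<in> Z" "bb \<in> Y" | "a \<in> Y" "bb \<in> Y" | "a \<in> Z" "bb \<in> Z" using a bb by blast
  then show ?thesis
  proof cases
    case 1
    then have "gpath ?g [a, bb] a bb" using path2 nb by simp
    then show ?thesis using v by (intro exI[of _ "[a, bb]"]) simp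
  next
    case 2
    then have "gpath ?g [a, bb] a bb" using path2 nb by simp
    then show ?thesis using v by (intro exI[of _ "[a, bb]"]) simp
  next
    case 3
    obtain z where z: "z \<in> Z" "z \<noteq> v" using exZ by blast
    have "gpath ?g [a, z, bb] a bb" using path3[of ?g a z bb] nb 3 z ab by simp
    then show ?thesis using v z by (intro exI[of _ "[a, z, bb]"]) simp
  next
    case 4
    obtain y where y: "y \<in> Y" "y \<noteq> v" using exY by blast
    have "gpath ?g [a, y, bb] a bb" using path3[of ?g a y bb] nb 4 y ab by simp
    then show ?thesis using v y by (intro exI[of _ "[a, y, bb]"]) simp
  qed
qed

lemma x_path:
  assumes SY: "S \<subseteq> Y" and Sv: "S \<noteq> {}" "S \<noteq> {v}" and bb: "bb \<in> Y \<union> Z" and v: "v \<noteq> bb" "v \<noteq> x"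
  shows "\<exists>xs. gpath (GS Y Z x S) xs x bb \<and> v \<notin> set xs"
proof -
  let ?g = "GS Y Z x S"
  note nb = nbr_GS[OF SY]
  obtain s where s: "s \<in> S" "s \<noteq> v" using Sv by blast
  have sY: "s \<in> Y" using s SY by blast
  have xb: "x \<noteq> bb" using bb xY xZ by blast
  consider "bb \<in> S" | "bb \<in> Y" "bb \<notin> S" | "bb \<in> Z" using bb by blast
  then show ?thesis
  proof cases
    case 1
    then have "gpath ?g [x, bb] x bb" using path2 nb by simp
    then show ?thesis using v by (intro exI[of _ "[x, bb]"]) simp
  next
    case 2
    obtain z where z: "z \<in> Z" "z \<noteq> v" using exZ by blast
    have "s \<noteq> bb" using s 2 by blast
    have "x \<noteq> z" using z xZ by blast
    have "gpath ?g [x, s, z, bb] x bb"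
      using path4[of ?g x s z bb] nb s sY z 2 xb \<open>s \<noteq> bb\<close> \<open>x \<noteq> z\<close> by simp
    then show ?thesis using v z s by (intro exI[of _ "[x, s, z, bb]"]) simp
  next
    case 3
    have "gpath ?g [x, s, bb] x bb" using path3[of ?g x s bb] nb s sY 3 xb by simp
    then show ?thesis using v s by (intro exI[of _ "[x, s, bb]"]) simp
  qed
qed

lemma gen_path:
  assumes SY: "S \<subseteq> Y" and Sne: "S \<noteq> {}" and a: "a \<in> N" and bb: "bb \<in> N" and ab: "a \<noteq> bb"
    and v: "v \<noteq> a" "v \<noteq> bb" and Sv: "S \<noteq> {v} \<or> (a \<noteq> x \<and> bb \<noteq> x)"
  shows "\<exists>xs. gpath (GS Y Z x S) xs a bb \<and> v \<notin> set xs"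
proof -
  consider "a = x" | "bb = x" | "a \<noteq> x" "bb \<noteq> x" by blast
  then show ?thesis
  proof cases
    case 1
    then have "bb \<in> Y \<union> Z" using bb ab Ndef by auto
    then show ?thesis using x_path[OF SY Sne _ _ v(2)] 1 Sv v by auto
  next
    case 2
    then have "a \<in> Y \<union> Z" using a ab Ndef by auto
    then obtain xs where "gpath (GS Y Z x S) xs x a" "v \<notin> set xs"
      using x_path[OF SY Sne _ _ v(1)] 2 Sv v by auto
    then show ?thesis using gpath_rev 2 by (intro exI[of _ "rev xs"]) simp
  next
    case 3
    then show ?thesis using core_path[OF SY _ _ ab v] a bb Ndef by auto
  qed
qed

lemma joined_GS:
  assumes SY: "S \<subseteq> Y" and Sne: "S \<noteq> {}" and a: "a \<in> N" and bb: "bb \<in> N"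
  shows "joined (GS Y Z x S) a bb"
proof (cases "a = bb")
  case True then show ?thesis using joined_self by simp
next
  case False
  obtain v where v: "v \<notin> N" using finN ex_new_if_finite[OF infinite_UNIV_nat] by blast
  have "S \<noteq> {v}" using v SY Ndef by auto
  then show ?thesis using gen_path[OF SY Sne a bb False, of v] v a bb unfolding joined_def by auto
qed

lemma noness_GS:
  assumes SY: "S \<subseteq> Y" and Sne: "S \<noteq> {}" and a: "a \<in> N" and bb: "bb \<in> N"
    and Sv: "S \<noteq> {v} \<or> (a \<noteq> x \<and> bb \<noteq> x)"
  shows "v \<notin> ess N (GS Y Z x S) a bb"
proof (cases "a = bb")
  case True then show ?thesis using ess_self by simp
next
  case False
  show ?thesis
  proof (cases "v = a \<or> v = bb")
    case True then show ?thesis unfolding ess_def by auto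
  next
    case F2: False
    then obtain xs where "gpath (GS Y Z x S) xs a bb" "v \<notin> set xs"
      using gen_path[OF SY Sne a bb False] Sv by auto
    then show ?thesis using ess_avoid by blast
  qed
qed

end


lemma notin_of_nbr: "a \<noteq> bb \<Longrightarrow> \<not> nbr g a bb \<Longrightarrow> {a, bb} \<notin> g"
  unfolding nbr_def by simp

lemma nbr_sub: "g \<subseteq> g' \<Longrightarrow> nbr g a bb \<Longrightarrow> nbr g' a bb"
  unfolding nbr_def by auto

lemma DPL1: "g \<subseteq> g' \<Longrightarrow> nbr g p u \<Longrightarrow> gdist g' p u = gdist g p u"
  using gdist1 nbr_sub by metis

lemma DPL2: "g \<subseteq> g' \<Longrightarrow> p \<noteq> u \<Longrightarrow> \<not> nbr g' p u \<Longrightarrow> nbr g p m \<Longrightarrow> nbr g m u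
   \<Longrightarrow> gdist g' p u = gdist g p u"
proof -
  assume a: "g \<subseteq> g'" "p \<noteq> u" "\<not> nbr g' p u" "nbr g p m" "nbr g m u"
  have "\<not> nbr g p u" using a(1,3) nbr_sub by blast
  then have "gdist g p u = 2" using gdist2[OF a(2) _ a(4,5)] by simp
  moreover have "gdist g' p u = 2" using gdist2[OF a(2,3) nbr_sub[OF a(1,4)] nbr_sub[OF a(1,5)]] .
  ultimately show ?thesis by simp
qed

lemma sum_single_eq:
  fixes f :: "'a \<Rightarrow> real"
  assumes "finite A" "q0 \<in> A" "\<forall>q\<in>A. q \<noteq> q0 \<longrightarrow> f q = 0"
  shows "sum f A = f q0"
proof -
  have "sum f A = f q0 + sum f (A - {q0})" using sum.remove[OF assms(1,2)] by simp
  moreover have "sum f (A - {q0}) = 0" using assms(3) by (intro sum.neutral) auto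
  ultimately show ?thesis by simp
qed

context gen
begin

lemma ess_empty_GS:
  assumes SY: "S \<subseteq> Y" and Sne: "S \<noteq> {}" and a: "a \<in> N" and bb: "bb \<in> N" and ax: "a \<noteq> x" and bx: "bb \<noteq> x"
  shows "ess N (GS Y Z x S) a bb = {}"
proof -
  have "v \<notin> ess N (GS Y Z x S) a bb" for v
    by (rule noness_GS[OF SY Sne a bb]) (simp add: ax bx)
  then show ?thesis by blast
qed

lemma noncut_GS:
  assumes SY: "S \<subseteq> Y" and Sne: "S \<noteq> {}" and Sp: "S \<noteq> {p}"
  shows "\<forall>y\<in>N. \<forall>z\<in>N. p \<notin> ess N (GS Y Z x S) y z"
proof (intro ballI)
  fix y z assume "y \<in> N" "z \<in> N"
  then show "p \<notin> ess N (GS Y Z x S) y z" by (rule noness_GS[OF SY Sne]) (simp add: Sp)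
qed

lemma Z_side_bound:
  assumes SY: "S \<subseteq> Y" and Sne: "S \<noteq> {}" and w: "w \<in> Z" and k: "k \<in> insert x Z" and wk: "w \<noteq> k"
  shows "util b c gam N (insert {w, k} (GS Y Z x S)) w - util b c gam N (GS Y Z x S) w
     \<le> b 1 - c - b 2 + gam * b 2"
proof -
  let ?g = "GS Y Z x S"
  let ?g' = "insert {w, k} ?g"
  note nb = nbr_GS[OF SY]
  have sub: "?g \<subseteq> ?g'" by auto
  have wN: "w \<in> N" and kN: "k \<in> N" using w k Ndef by auto
  have wY: "w \<notin> Y" using w YZ by blast
  have wS: "w \<notin> S" using wY SY by blast
  have wx: "w \<noteq> x" using w xZ by blast
  have kY: "k \<notin> Y" using k YZ xY by blast
  have kS: "k \<notin> S" using kY SY by blast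
  have nwk: "\<not> nbr ?g w k" by (simp add: nb wY kY wS kS wx)
  have ng: "{w, k} \<notin> ?g" by (rule notin_of_nbr[OF wk nwk])
  obtain s where s: "s \<in> S" using Sne by blast
  have sY: "s \<in> Y" using s SY by blast
  have sZ: "s \<notin> Z" using sY YZ by blast
  have sx: "s \<noteq> x" using sY xY by blast
  have m1: "nbr ?g w s" by (simp add: nb w sY)
  have m2: "nbr ?g s k"
  proof (cases "k = x")
    case True then show ?thesis by (simp add: nb s)
  next
    case False
    then have "k \<in> Z" using k by simp
    then show ?thesis by (simp add: nb sY)
  qed
  have Sw: "S \<noteq> {w}" using wS s by blast
  have nc: "\<forall>y\<in>N. \<forall>z\<in>N. w \<notin> ess N ?g y z" by (rule noncut_GS[OF SY Sne Sw])
  have dp: "\<forall>u\<in>N-{w,k}. joined ?g w u \<and> gdist ?g' w u = gdist ?g w u"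
  proof (intro ballI conjI)
    fix u assume u: "u \<in> N - {w, k}"
    then have uN: "u \<in> N" and uw: "u \<noteq> w" and uk: "u \<noteq> k" by auto
    show "joined ?g w u" by (rule joined_GS[OF SY Sne wN uN])
    have uN': "u \<in> insert x (Y \<union> Z)" using uN Ndef by simp
    have nn: "\<not> nbr ?g' w u" if "u \<notin> Y" 
      using that uk uw wS wY wx unfolding nbr_ins by (simp add: nb)
    consider "u \<in> Y" | "u = x" | "u \<in> Z" using uN' by blast
    then show "gdist ?g' w u = gdist ?g w u"
    proof cases
      case 1
      then have "nbr ?g w u" by (simp add: nb w)
      then show ?thesis by (rule DPL1[OF sub])
    next
      case 2
      have "u \<notin> Y" using 2 xY by simp
      moreover have "nbr ?g s u" using 2 by (simp add: nb s)
      ultimately show ?thesis using DPL2[OF sub uw[symmetric] nn m1] by blast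
    next
      case 3
      have "u \<notin> Y" using 3 YZ by blast
      moreover have "nbr ?g s u" using 3 by (simp add: nb sY)
      ultimately show ?thesis using DPL2[OF sub uw[symmetric] nn m1] by blast
    qed
  qed
  have d2: "gdist ?g w x = 2"
  proof (rule gdist2[OF wx _ m1])
    show "\<not> nbr ?g w x" by (simp add: nb wY wS wx xY)
    show "nbr ?g s x" by (simp add: nb s)
  qed
  have es: "\<forall>u\<in>N-{w}. ess N ?g w u \<noteq> {} \<longrightarrow> u = x \<and> 2 \<le> gdist ?g w x"
  proof (intro ballI impI)
    fix u assume u: "u \<in> N - {w}" "ess N ?g w u \<noteq> {}"
    have "u = x"
    proof (rule ccontr)
      assume "u \<noteq> x"
      then have "ess N ?g w u = {}" using ess_empty_GS[OF SY Sne wN _ wx] u by simp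
      then show False using u by simp
    qed
    then show "u = x \<and> 2 \<le> gdist ?g w x" using d2 by simp
  qed
  show ?thesis
    by (rule gen_bound[OF finN edges_GS[OF SY] wN kN wk ng m1 m2 nc dp es])
qed

end


context fam
begin

lemma cut_x:
  assumes E: "edges_in N g" and only: "\<forall>cc. nbr g cc x \<longrightarrow> cc = t" and a: "a \<in> Y \<union> Z" and at: "a \<noteq> t"
    and t: "t \<in> Y"
  shows "t \<in> ess N g a x"
proof (rule ess_cut[where C = "(Y \<union> Z) - {t}"])
  show "t \<in> N" using t Ndef by simp
  show "t \<noteq> a" using at by simp
  show "t \<noteq> x" using t xY by blast
  show "a \<in> Y \<union> Z - {t}" using a at by simp
  show "x \<notin> Y \<union> Z - {t}" using xY xZ by simp
  show "t \<notin> Y \<union> Z - {t}" by simp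
  show "\<forall>aa\<in>Y \<union> Z - {t}. \<forall>b'. nbr g aa b' \<longrightarrow> b' \<in> Y \<union> Z - {t} \<or> b' = t"
  proof (intro ballI allI impI)
    fix aa b' assume h: "aa \<in> Y \<union> Z - {t}" "nbr g aa b'"
    have "b' \<in> N" using E h(2) unfolding edges_in_def by blast
    moreover have "b' \<noteq> x" using only h nbr_sym by blast
    ultimately show "b' \<in> Y \<union> Z - {t} \<or> b' = t" using Ndef by auto
  qed
qed

end

context gen
begin

lemma Y_side_bound:
  assumes SY: "S \<subseteq> Y" and Sne: "S \<noteq> {}" and p: "p \<in> Y" and k: "k \<in> Y" and pk: "p \<noteq> k"
    and Sp: "S \<noteq> {p}" and pkS: "p \<in> S \<or> k \<notin> S"
  shows "util b c gam N (insert {p, k} (GS Y Z x S)) p - util b c gam N (GS Y Z x S) p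
     \<le> b 1 - c - b 2 + gam * b 2"
proof -
  let ?g = "GS Y Z x S"
  let ?g' = "insert {p, k} ?g"
  note nb = nbr_GS[OF SY]
  have sub: "?g \<subseteq> ?g'" by auto
  have pN: "p \<in> N" and kN: "k \<in> N" using p k Ndef by auto
  have pZ: "p \<notin> Z" and kZ: "k \<notin> Z" using p k YZ by auto
  have px: "p \<noteq> x" and kx: "k \<noteq> x" using p k xY by auto
  have nwk: "\<not> nbr ?g p k" by (simp add: nb xY xZ pZ kZ px kx)
  have ng: "{p, k} \<notin> ?g" by (rule notin_of_nbr[OF pk nwk])
  obtain z where z: "z \<in> Z" using exZ by blast
  have zY: "z \<notin> Y" using z YZ by blast
  have m1: "nbr ?g p z" by (simp add: nb xY xZ p z)
  have m2: "nbr ?g z k" by (simp add: nb xY xZ k z)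
  have nc: "\<forall>y\<in>N. \<forall>z\<in>N. p \<notin> ess N ?g y z" by (rule noncut_GS[OF SY Sne Sp])
  obtain s where s: "s \<in> S" using Sne by blast
  have sY: "s \<in> Y" using s SY by blast
  have d3: "gdist ?g' p x = gdist ?g p x \<and> 2 \<le> gdist ?g p x" if pS: "p \<notin> S"
  proof -
    have kS: "k \<notin> S" using pkS pS by simp
    have xn: "\<not> nbr ?g p x" by (simp add: nb xY xZ pS pZ px)
    have xn': "\<not> nbr ?g' p x" using xn px kx unfolding nbr_ins by simp
    have nc1: "\<not> (\<exists>m. nbr ?g p m \<and> nbr ?g m x)"
    proof
      assume "\<exists>m. nbr ?g p m \<and> nbr ?g m x"
      then obtain m where "nbr ?g p m" "nbr ?g m x" by blast
      then show False using pS p YZ SY xY xZ by (auto simp: nb)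
    qed
    have nc2: "\<not> (\<exists>m. nbr ?g' p m \<and> nbr ?g' m x)"
    proof
      assume "\<exists>m. nbr ?g' p m \<and> nbr ?g' m x"
      then obtain m where h: "nbr ?g' p m" "nbr ?g' m x" by blast
      then have "nbr ?g m x" using px kx unfolding nbr_ins by auto
      then have "m \<in> S" by (auto simp add: nb xY xZ dest: subsetD[OF SY])
      moreover have "m \<in> Z \<or> m = k" using h(1) pS p YZ SY px unfolding nbr_ins by (auto simp: nb)
      ultimately show False using kS SY YZ by blast
    qed
    have zs: "nbr ?g z s" by (simp add: nb xY xZ z sY)
    have sx: "nbr ?g s x" by (simp add: nb xY xZ s)
    have e1: "gdist ?g p x = 3" using gdist3[OF px xn nc1 m1 zs sx] .
    have e2: "gdist ?g' p x = 3"
      using gdist3[OF px xn' nc2 nbr_sub[OF sub m1] nbr_sub[OF sub zs] nbr_sub[OF sub sx]] .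
    show ?thesis using e1 e2 by simp
  qed
  have dp: "\<forall>u\<in>N-{p,k}. joined ?g p u \<and> gdist ?g' p u = gdist ?g p u"
  proof (intro ballI conjI)
    fix u assume u: "u \<in> N - {p, k}"
    then have uN: "u \<in> N" and up: "u \<noteq> p" and uk: "u \<noteq> k" by auto
    show "joined ?g p u" by (rule joined_GS[OF SY Sne pN uN])
    have uN': "u \<in> insert x (Y \<union> Z)" using uN Ndef by simp
    consider "u \<in> Z" | "u = x" | "u \<in> Y" using uN' by blast
    then show "gdist ?g' p u = gdist ?g p u"
    proof cases
      case 1
      then have "nbr ?g p u" by (simp add: nb xY xZ p)
      then show ?thesis by (rule DPL1[OF sub])
    next
      case 2
      show ?thesis
      proof (cases "p \<in> S")
        case True
        then have "nbr ?g p u" using 2 by (simp add: nb xY xZ)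
        then show ?thesis by (rule DPL1[OF sub])
      next
        case False
        then show ?thesis using d3 2 by simp
      qed
    next
      case 3
      have "u \<notin> Z" "u \<noteq> x" using 3 YZ xY by auto
      then have nn: "\<not> nbr ?g' p u" using uk up pZ px unfolding nbr_ins by (simp add: nb xY xZ)
      have "nbr ?g z u" using 3 by (simp add: nb xY xZ z)
      then show ?thesis using DPL2[OF sub up[symmetric] nn m1] by blast
    qed
  qed
  have es: "\<forall>u\<in>N-{p}. ess N ?g p u \<noteq> {} \<longrightarrow> u = x \<and> 2 \<le> gdist ?g p x"
  proof (intro ballI impI)
    fix u assume u: "u \<in> N - {p}" "ess N ?g p u \<noteq> {}"
    have ux: "u = x"
    proof (rule ccontr)
      assume "u \<noteq> x"
      then have "ess N ?g p u = {}" using ess_empty_GS[OF SY Sne pN _ px] u by simp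
      then show False using u by simp
    qed
    have pS: "p \<notin> S"
    proof
      assume "p \<in> S"
      then have "nbr ?g p x" by (simp add: nb xY xZ)
      then show False using ess_nbr[of ?g p x N] u ux by simp
    qed
    show "u = x \<and> 2 \<le> gdist ?g p x" using ux d3[OF pS] by simp
  qed
  show ?thesis
    by (rule gen_bound[OF finN edges_GS[OF SY] pN kN pk ng m1 m2 nc dp es])
qed

end


context fam
begin

lemma N_le_x: "a \<in> N \<Longrightarrow> a \<le> x"
proof -
  assume "a \<in> N"
  then have "a = x \<or> a \<in> Y \<union> Z" using Ndef by simp
  then show ?thesis using xmax less_imp_le by blast
qed

lemma PR_cases:
  assumes "q \<in> PR N"
  obtains a bb where "q = (a, bb)" "a \<in> N" "bb \<in> N" "a < bb" "a \<noteq> x"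
proof -
  obtain a bb where q: "q = (a, bb)" by (cases q)
  then have "a \<in> N" "bb \<in> N" "a < bb" using assms unfolding PR_def by auto
  moreover have "a \<noteq> x" using N_le_x[of bb] calculation by simp
  ultimately show ?thesis using that q by blast
qed

end

context gen
begin

lemma t_exact:
  assumes t: "t \<in> Y" and u: "u \<in> Y" and ut: "u \<noteq> t"
  shows "util b c gam N (insert {t, u} (GS Y Z x {t})) t - util b c gam N (GS Y Z x {t}) t
     = b 1 - b 2 - c + 2 * gam * (b 2 - b 3)"
proof -
  let ?g = "GS Y Z x {t}"
  let ?g' = "insert {t, u} ?g"
  have SY: "{t} \<subseteq> Y" using t by simp
  have Sne: "{t} \<noteq> {}" by simp
  note nb = nbr_GS[OF SY]
  have sub: "?g \<subseteq> ?g'" by auto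
  have tN: "t \<in> N" and uN: "u \<in> N" and xN: "x \<in> N" using t u Ndef by auto
  have tZ: "t \<notin> Z" and uZ: "u \<notin> Z" using t u YZ by auto
  have tx: "t \<noteq> x" and ux: "u \<noteq> x" using t u xY by auto
  have tu: "t \<noteq> u" using ut by simp
  have nb': "nbr ?g' a bb \<longleftrightarrow> nbr ?g a bb \<or> (a = t \<and> bb = u) \<or> (a = u \<and> bb = t)" for a bb
    using tu unfolding nbr_ins by auto
  have ntu: "\<not> nbr ?g t u" by (simp add: nb tZ uZ tx ux)
  have ng: "{t, u} \<notin> ?g" by (rule notin_of_nbr[OF tu ntu])
  obtain z where z: "z \<in> Z" using exZ by blast
  have zY: "z \<notin> Y" and zx: "z \<noteq> x" using z YZ xZ by auto
  have onlyx: "\<forall>cc. nbr ?g cc x \<longrightarrow> cc = t" by (simp add: nb xY xZ)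
  have onlyx': "\<forall>cc. nbr ?g' cc x \<longrightarrow> cc = t" using onlyx tx ux nb' by blast
  have E: "edges_in N ?g" by (rule edges_GS[OF SY])
  have E': "edges_in N ?g'" by (rule edges_in_ins[OF E tN uN])
  have esx: "ess N ?g a x = {t} \<and> ess N ?g' a x = {t}" if a: "a \<in> Y \<union> Z" "a \<noteq> t" for a
  proof -
    have aN: "a \<in> N" using a Ndef by simp
    have t1: "t \<in> ess N ?g a x" by (rule cut_x[OF E onlyx a t])
    have t2: "t \<in> ess N ?g' a x" by (rule cut_x[OF E' onlyx' a t])
    have o1: "v \<notin> ess N ?g a x" if "v \<noteq> t" for v
      by (rule noness_GS[OF SY Sne aN xN]) (use that in simp)
    have "ess N ?g a x = {t}" using t1 o1 by blast
    moreover have "ess N ?g' a x = {t}" using t2 o1 ess_mono[OF sub, of N a x] by blast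
    ultimately show ?thesis by simp
  qed
  have jx: "joined ?g a bb" "joined ?g' a bb" if "a \<in> N" "bb \<in> N" for a bb
    using joined_GS[OF SY Sne that] joined_mono[OF sub] by blast+
  have zt: "nbr ?g z t" by (simp add: nb z t)
  have tX: "nbr ?g t x" by (simp add: nb)
  have dZ: "gdist ?g a x = 2 \<and> gdist ?g' a x = 2" if a: "a \<in> Z" for a
  proof -
    have ax: "a \<noteq> x" using a xZ by blast
    have n1: "\<not> nbr ?g a x" using a onlyx tZ by blast
    have n2: "\<not> nbr ?g' a x" using a onlyx' tZ by blast
    have at: "nbr ?g a t" by (simp add: nb a t)
    show ?thesis using gdist2[OF ax n1 at tX] gdist2[OF ax n2 nbr_sub[OF sub at] nbr_sub[OF sub tX]] by simp
  qed
  have d3: "gdist ?g a x = 3" if a: "a \<in> Y" "a \<noteq> t" for a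
  proof -
    have ax: "a \<noteq> x" using a xY by blast
    have n1: "\<not> nbr ?g a x" using a onlyx by blast
    have nc: "\<not> (\<exists>m. nbr ?g a m \<and> nbr ?g m x)"
    proof
      assume "\<exists>m. nbr ?g a m \<and> nbr ?g m x"
      then obtain m where "nbr ?g a m" "nbr ?g m x" by blast
      then have "nbr ?g a t" using onlyx by blast
      then show False using a t YZ xY by (auto simp: nb)
    qed
    have az: "nbr ?g a z" by (simp add: nb a z)
    show ?thesis by (rule gdist3[OF ax n1 nc az zt tX])
  qed
  have d3': "gdist ?g' a x = 3" if a: "a \<in> Y" "a \<noteq> t" "a \<noteq> u" for a
  proof -
    have ax: "a \<noteq> x" using a xY by blast
    have n1: "\<not> nbr ?g' a x" using a onlyx' by blast
    have nc: "\<not> (\<exists>m. nbr ?g' a m \<and> nbr ?g' m x)"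
    proof
      assume "\<exists>m. nbr ?g' a m \<and> nbr ?g' m x"
      then obtain m where "nbr ?g' a m" "nbr ?g' m x" by blast
      then have "nbr ?g' a t" using onlyx' by blast
      then have "nbr ?g a t" using a nb' by blast
      then show False using a t YZ xY by (auto simp: nb)
    qed
    have az: "nbr ?g a z" by (simp add: nb a z)
    show ?thesis by (rule gdist3[OF ax n1 nc nbr_sub[OF sub az] nbr_sub[OF sub zt] nbr_sub[OF sub tX]])
  qed
  have du: "gdist ?g' u x = 2"
  proof -
    have n2: "\<not> nbr ?g' u x" using onlyx' ut by blast
    have "nbr ?g' u t" using nb' by blast
    then show ?thesis using gdist2[OF ux n2 _ nbr_sub[OF sub tX]] by blast
  qed
  have V: "(\<Sum>w\<in>N-{t}. val b gam N ?g' t w - val b gam N ?g t w) = b 1 - b 2"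
  proof -
    have "(\<Sum>w\<in>N-{t}. val b gam N ?g' t w - val b gam N ?g t w) = val b gam N ?g' t u - val b gam N ?g t u"
    proof (rule sum_single_eq)
      show "finite (N - {t})" using finN by simp
      show "u \<in> N - {t}" using uN ut by simp
      show "\<forall>w\<in>N - {t}. w \<noteq> u \<longrightarrow> val b gam N ?g' t w - val b gam N ?g t w = 0"
      proof (intro ballI impI)
        fix w assume w: "w \<in> N - {t}" "w \<noteq> u"
        have wN: "w \<in> N" using w by simp
        have e1: "ess N ?g t w = {}"
        proof (cases "w = x")
          case True then show ?thesis using ess_nbr[OF tX] by simp
        next
          case False then show ?thesis using ess_empty_GS[OF SY Sne tN wN tx] by simp
        qed
        have e2: "ess N ?g' t w = {}" using e1 ess_mono[OF sub, of N t w] by blast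
        have dd: "gdist ?g' t w = gdist ?g t w"
        proof -
          have wN': "w \<in> insert x (Y \<union> Z)" using wN Ndef by simp
          consider "w \<in> Z" | "w = x" | "w \<in> Y" using wN' by blast
          then show ?thesis
          proof cases
            case 1
            then have "nbr ?g t w" by (simp add: nb t)
            then show ?thesis by (rule DPL1[OF sub])
          next
            case 2
            then show ?thesis using DPL1[OF sub tX] by simp
          next
            case 3
            have wt: "w \<noteq> t" using w by simp
            have "w \<notin> Z" "w \<noteq> x" using 3 YZ xY by auto
            then have nn: "\<not> nbr ?g' t w" using w tZ tx wt unfolding nb' by (simp add: nb)
            have tz: "nbr ?g t z" by (simp add: nb t z)
            have "nbr ?g z w" by (simp add: nb z 3)
            then show ?thesis using DPL2[OF sub wt[symmetric] nn tz] by blast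
          qed
        qed
        show "val b gam N ?g' t w - val b gam N ?g t w = 0"
          unfolding val_def using jx[OF tN wN] e1 e2 dd by simp
      qed
    qed
    moreover have "val b gam N ?g' t u = b 1" by (rule val_nbr) (simp add: nb')
    moreover have "val b gam N ?g t u = b 2"
    proof -
      have tz: "nbr ?g t z" by (simp add: nb t z)
      have zu: "nbr ?g z u" by (simp add: nb z u)
      have "gdist ?g t u = 2" by (rule gdist2[OF tu ntu tz zu])
      moreover have "ess N ?g t u = {}" using ess_empty_GS[OF SY Sne tN uN tx ux] .
      ultimately show ?thesis unfolding val_def using jx[OF tN uN] by simp
    qed
    ultimately show ?thesis by simp
  qed
  have I: "(\<Sum>q\<in>PR N. iterm b gam N ?g' t q - iterm b gam N ?g t q) = 2 * gam * (b 2 - b 3)"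
  proof -
    have "(\<Sum>q\<in>PR N. iterm b gam N ?g' t q - iterm b gam N ?g t q)
        = iterm b gam N ?g' t (u, x) - iterm b gam N ?g t (u, x)"
    proof (rule sum_single_eq)
      show "finite (PR N)" by (rule PR_finite[OF finN])
      show "(u, x) \<in> PR N" unfolding PR_def using uN xN xmax u by auto
      show "\<forall>q\<in>PR N. q \<noteq> (u, x) \<longrightarrow> iterm b gam N ?g' t q - iterm b gam N ?g t q = 0"
      proof (intro ballI impI)
        fix q assume q: "q \<in> PR N" "q \<noteq> (u, x)"
        obtain a bb where ab: "q = (a, bb)" "a \<in> N" "bb \<in> N" "a < bb" "a \<noteq> x" by (rule PR_cases[OF q(1)])
        show "iterm b gam N ?g' t q - iterm b gam N ?g t q = 0"
        proof (cases "bb = x")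
          case False
          have "ess N ?g a bb = {}" by (rule ess_empty_GS[OF SY Sne ab(2,3,5) False])
          then have "ess N ?g' a bb = {}" using ess_mono[OF sub, of N a bb] by blast
          then show ?thesis unfolding iterm_def ab(1) using \<open>ess N ?g a bb = {}\<close> by simp
        next
          case True
          then have au: "a \<noteq> u" using q(2) ab(1) by simp
          show ?thesis
          proof (cases "a = t")
            case True
            then have "t \<notin> ess N ?g a bb" "t \<notin> ess N ?g' a bb" unfolding ess_def by auto
            then show ?thesis unfolding iterm_def ab(1) by simp
          next
            case at: False
            have aYZ: "a \<in> Y \<union> Z" using ab(2,5) Ndef by simp
            have ee: "ess N ?g a x = {t}" "ess N ?g' a x = {t}" using esx[OF aYZ at] by auto
            have dd: "gdist ?g' a x = gdist ?g a x"
            proof (cases "a \<in> Z")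
              case True then show ?thesis using dZ by simp
            next
              case False
              then have "a \<in> Y" using aYZ by simp
              then show ?thesis using d3[OF _ at] d3'[OF _ at au] by simp
            qed
            show ?thesis unfolding iterm_def ab(1) True using ee dd jx[OF ab(2) xN] by simp
          qed
        qed
      qed
    qed
    moreover have "iterm b gam N ?g' t (u, x) = gam * 2 * b 2"
      unfolding iterm_def using esx[OF _ ut] u du jx[OF uN xN] by simp
    moreover have "iterm b gam N ?g t (u, x) = gam * 2 * b 3"
      unfolding iterm_def using esx[OF _ ut] u d3[OF u ut] jx[OF uN xN] by simp
    ultimately show ?thesis by (simp add: algebra_simps)
  qed
  show ?thesis
    unfolding util_add_diff[OF finN E tN uN tu ng] V I by simp
qed

end


lemma nbr_P3:
  assumes "distinct [v1, v2, v3]"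
  shows "nbr {{v1, v2}, {v2, v3}} a bb \<longleftrightarrow>
    (a = v1 \<and> bb = v2) \<or> (a = v2 \<and> bb = v1) \<or> (a = v2 \<and> bb = v3) \<or> (a = v3 \<and> bb = v2)"
  using assms unfolding nbr_def by (auto simp: doubleton_eq_iff)

lemma nbr_C4:
  assumes "distinct [v1, v2, v3, v4]"
  shows "nbr {{v1, v2}, {v2, v3}, {v3, v4}, {v4, v1}} a bb \<longleftrightarrow>
    (a = v1 \<and> bb = v2) \<or> (a = v2 \<and> bb = v1) \<or> (a = v2 \<and> bb = v3) \<or> (a = v3 \<and> bb = v2) \<or>
    (a = v3 \<and> bb = v4) \<or> (a = v4 \<and> bb = v3) \<or> (a = v4 \<and> bb = v1) \<or> (a = v1 \<and> bb = v4)"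
  using assms unfolding nbr_def by (auto simp: doubleton_eq_iff)

lemma nbr_P4:
  assumes "distinct [v1, v2, v3, v4]"
  shows "nbr {{v1, v2}, {v2, v3}, {v3, v4}} a bb \<longleftrightarrow>
    (a = v1 \<and> bb = v2) \<or> (a = v2 \<and> bb = v1) \<or> (a = v2 \<and> bb = v3) \<or> (a = v3 \<and> bb = v2) \<or>
    (a = v3 \<and> bb = v4) \<or> (a = v4 \<and> bb = v3)"
  using assms unfolding nbr_def by (auto simp: doubleton_eq_iff)

lemma ess_endpoint: "v = y \<or> v = z \<Longrightarrow> v \<notin> ess N g y z"
  unfolding ess_def by auto

context prm
begin

lemma small_P3:
  assumes d: "distinct [v1, v2, v3]" and N: "N = {v1, v2, v3}"
  shows "util b c gam N (insert {v1, v3} {{v1, v2}, {v2, v3}}) v1 - util b c gam N {{v1, v2}, {v2, v3}} v1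
     \<le> b 1 - c - b 2 + gam * b 2"
proof -
  let ?g = "{{v1, v2}, {v2, v3}} :: network"
  note nb = nbr_P3[OF d]
  have fin: "finite N" using N by simp
  have E: "edges_in N ?g" unfolding edges_in_def nb N by auto
  have pN: "v1 \<in> N" and kN: "v3 \<in> N" using N by auto
  have pk: "v1 \<noteq> v3" using d by simp
  have ng: "{v1, v3} \<notin> ?g" using d by (auto simp: doubleton_eq_iff)
  have m1: "nbr ?g v1 v2" and m2: "nbr ?g v2 v3" by (simp_all add: nb)
  have nc: "\<forall>y\<in>N. \<forall>z\<in>N. v1 \<notin> ess N ?g y z"
  proof (intro ballI)
    fix y z assume yz: "y \<in> N" "z \<in> N"
    show "v1 \<notin> ess N ?g y z"
    proof (cases "v1 = y \<or> v1 = z")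
      case True then show ?thesis by (rule ess_endpoint)
    next
      case False
      then have "y = z \<or> nbr ?g y z" using yz N d by (auto simp: nb)
      then show ?thesis using ess_self[of N ?g y] ess_nbr[of ?g y z N] by auto
    qed
  qed
  have dp: "\<forall>w\<in>N-{v1,v3}. joined ?g v1 w \<and> gdist (insert {v1, v3} ?g) v1 w = gdist ?g v1 w"
  proof
    fix w assume "w \<in> N - {v1, v3}"
    then have "w = v2" using N by auto
    then show "joined ?g v1 w \<and> gdist (insert {v1, v3} ?g) v1 w = gdist ?g v1 w"
      using nbr_joined[OF m1] DPL1[OF _ m1, of "insert {v1, v3} ?g"] by auto
  qed
  have es: "\<forall>w\<in>N-{v1}. ess N ?g v1 w \<noteq> {} \<longrightarrow> w = v3 \<and> 2 \<le> gdist ?g v1 v3"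
  proof (intro ballI impI)
    fix w assume w: "w \<in> N - {v1}" "ess N ?g v1 w \<noteq> {}"
    have "w \<noteq> v2" using w ess_nbr[OF m1] by auto
    then have "w = v3" using w N by auto
    moreover have "gdist ?g v1 v3 = 2" by (rule gdist2[OF pk _ m1 m2]) (use d in \<open>simp add: nb\<close>)
    ultimately show "w = v3 \<and> 2 \<le> gdist ?g v1 v3" by simp
  qed
  show ?thesis by (rule gen_bound[OF fin E pN kN pk ng m1 m2 nc dp es])
qed

lemma small_C4:
  assumes d: "distinct [v1, v2, v3, v4]" and N: "N = {v1, v2, v3, v4}"
  shows "util b c gam N (insert {v1, v3} {{v1, v2}, {v2, v3}, {v3, v4}, {v4, v1}}) v1
      - util b c gam N {{v1, v2}, {v2, v3}, {v3, v4}, {v4, v1}} v1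
     \<le> b 1 - c - b 2 + gam * b 2"
proof -
  let ?g = "{{v1, v2}, {v2, v3}, {v3, v4}, {v4, v1}} :: network"
  note nb = nbr_C4[OF d]
  have fin: "finite N" using N by simp
  have E: "edges_in N ?g" unfolding edges_in_def nb N by auto
  have pN: "v1 \<in> N" and kN: "v3 \<in> N" using N by auto
  have pk: "v1 \<noteq> v3" using d by simp
  have ng: "{v1, v3} \<notin> ?g" using d by (auto simp: doubleton_eq_iff)
  have m1: "nbr ?g v1 v2" and m2: "nbr ?g v2 v3" by (simp_all add: nb)
  have m3: "nbr ?g v1 v4" and m4: "nbr ?g v4 v3" by (simp_all add: nb)
  have m5: "nbr ?g v3 v4" by (simp add: nb)
  have p234: "gpath ?g [v2, v3, v4] v2 v4" by (rule path3[OF m2 m5]) (use d in simp)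
  have nc: "\<forall>y\<in>N. \<forall>z\<in>N. v1 \<notin> ess N ?g y z"
  proof (intro ballI)
    fix y z assume yz: "y \<in> N" "z \<in> N"
    show "v1 \<notin> ess N ?g y z"
    proof (cases "v1 = y \<or> v1 = z")
      case True then show ?thesis by (rule ess_endpoint)
    next
      case False
      then have "y = z \<or> nbr ?g y z \<or> (y = v2 \<and> z = v4) \<or> (y = v4 \<and> z = v2)" using yz N d by (auto simp: nb)
      moreover have "v1 \<notin> ess N ?g v2 v4" using ess_avoid[OF p234] d by simp
      ultimately show ?thesis
      proof (elim disjE)
        assume "y = z" then show ?thesis using ess_self by simp
      next
        assume "nbr ?g y z" then show ?thesis using ess_nbr by simp
      next
        assume "y = v2 \<and> z = v4" then show ?thesis using \<open>v1 \<notin> ess N ?g v2 v4\<close> by simp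
      next
        assume "y = v4 \<and> z = v2" then show ?thesis using \<open>v1 \<notin> ess N ?g v2 v4\<close> ess_sym by metis
      qed
    qed
  qed
  have dp: "\<forall>w\<in>N-{v1,v3}. joined ?g v1 w \<and> gdist (insert {v1, v3} ?g) v1 w = gdist ?g v1 w"
  proof
    fix w assume "w \<in> N - {v1, v3}"
    then have "w = v2 \<or> w = v4" using N by auto
    then show "joined ?g v1 w \<and> gdist (insert {v1, v3} ?g) v1 w = gdist ?g v1 w"
      using nbr_joined[OF m1] DPL1[OF _ m1, of "insert {v1, v3} ?g"]
        nbr_joined[OF m3] DPL1[OF _ m3, of "insert {v1, v3} ?g"] by auto
  qed
  have es: "\<forall>w\<in>N-{v1}. ess N ?g v1 w \<noteq> {} \<longrightarrow> w = v3 \<and> 2 \<le> gdist ?g v1 v3"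
  proof (intro ballI impI)
    fix w assume w: "w \<in> N - {v1}" "ess N ?g v1 w \<noteq> {}"
    have "w \<noteq> v2" "w \<noteq> v4" using w ess_nbr[OF m1] ess_nbr[OF m3] by auto
    then have "w = v3" using w N by auto
    have q1: "gpath ?g [v1, v2, v3] v1 v3" by (rule path3[OF m1 m2 pk])
    have q2: "gpath ?g [v1, v4, v3] v1 v3" by (rule path3[OF m3 m4 pk])
    have "ess N ?g v1 v3 \<subseteq> {}"
    proof
      fix v assume v: "v \<in> ess N ?g v1 v3"
      then have "v \<in> N" "v \<noteq> v1" "v \<noteq> v3" unfolding ess_def by auto
      then have "v = v2 \<or> v = v4" using N by auto
      then show "v \<in> {}" using v ess_avoid[OF q1, of v] ess_avoid[OF q2, of v] d by auto
    qed
    then show "w = v3 \<and> 2 \<le> gdist ?g v1 v3" using w \<open>w = v3\<close> by simp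
  qed
  show ?thesis by (rule gen_bound[OF fin E pN kN pk ng m1 m2 nc dp es])
qed

end


lemma iterm_sym: "iterm b gam N g j (a, bb) = iterm b gam N g j (bb, a)"
  unfolding iterm_def using ess_sym[of N g a bb] gdist_sym[of g a bb] joined_sym[of g a bb] by simp

context prm
begin

lemma small_P4:
  assumes d: "distinct [v1, v2, v3, v4]" and N: "N = {v1, v2, v3, v4}"
  shows "util b c gam N (insert {v2, v4} {{v1, v2}, {v2, v3}, {v3, v4}}) v2
     - util b c gam N {{v1, v2}, {v2, v3}, {v3, v4}} v2
     = b 1 - c - b 2 + gam * (3 * b 2 - b 3)"
proof -
  let ?g = "{{v1, v2}, {v2, v3}, {v3, v4}} :: network"
  let ?g' = "insert {v2, v4} ?g"
  note nb = nbr_P4[OF d]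
  have dd: "v1 \<noteq> v2" "v1 \<noteq> v3" "v1 \<noteq> v4" "v2 \<noteq> v3" "v2 \<noteq> v4" "v3 \<noteq> v4"
    "v2 \<noteq> v1" "v3 \<noteq> v1" "v4 \<noteq> v1" "v3 \<noteq> v2" "v4 \<noteq> v2" "v4 \<noteq> v3" using d by auto
  have nb': "nbr ?g' a bb \<longleftrightarrow> nbr ?g a bb \<or> (a = v2 \<and> bb = v4) \<or> (a = v4 \<and> bb = v2)" for a bb
    using dd unfolding nbr_ins by auto
  have sub: "?g \<subseteq> ?g'" by auto
  have fin: "finite N" using N by simp
  have E: "edges_in N ?g" unfolding edges_in_def nb N by auto
  have pN: "v2 \<in> N" and kN: "v4 \<in> N" using N by auto
  have pk: "v2 \<noteq> v4" using dd by simp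
  have ng: "{v2, v4} \<notin> ?g" using dd by (auto simp: doubleton_eq_iff)
  have e12: "nbr ?g v1 v2" and e23: "nbr ?g v2 v3" and e34: "nbr ?g v3 v4" by (simp_all add: nb)
  have e21: "nbr ?g v2 v1" and e32: "nbr ?g v3 v2" and e43: "nbr ?g v4 v3" by (simp_all add: nb)
  have e24: "nbr ?g' v2 v4" by (simp add: nb')
  have n24: "\<not> nbr ?g v2 v4" and n13: "\<not> nbr ?g v1 v3" and n14: "\<not> nbr ?g v1 v4" by (simp_all add: nb dd)
  have n13': "\<not> nbr ?g' v1 v3" and n14': "\<not> nbr ?g' v1 v4" using dd n13 n14 by (simp_all add: nb')
  have d13: "distinct [v1, v3]" "distinct [v1, v4]" "v2 \<noteq> v3" using dd by auto
  have V: "(\<Sum>w\<in>N-{v2}. val b gam N ?g' v2 w - val b gam N ?g v2 w) = b 1 - (1 - gam) * b 2"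
  proof -
    have "(\<Sum>w\<in>N-{v2}. val b gam N ?g' v2 w - val b gam N ?g v2 w) = val b gam N ?g' v2 v4 - val b gam N ?g v2 v4"
    proof (rule sum_single_eq)
      show "finite (N - {v2})" using fin by simp
      show "v4 \<in> N - {v2}" using N dd by auto
      show "\<forall>w\<in>N - {v2}. w \<noteq> v4 \<longrightarrow> val b gam N ?g' v2 w - val b gam N ?g v2 w = 0"
      proof (intro ballI impI)
        fix w assume w: "w \<in> N - {v2}" "w \<noteq> v4"
        then have "nbr ?g v2 w" using N e21 e23 by auto
        then show "val b gam N ?g' v2 w - val b gam N ?g v2 w = 0"
          using val_nbr[of ?g v2 w N] val_nbr[OF nbr_sub[OF sub], of v2 w N] by simp
      qed
    qed
    moreover have "val b gam N ?g' v2 v4 = b 1" by (rule val_nbr[OF e24])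
    moreover have "val b gam N ?g v2 v4 = b 2 * (1 - gam)"
    proof -
      have "gdist ?g v2 v4 = 2" by (rule gdist2[OF pk n24 e23 e34])
      moreover have "v3 \<in> ess N ?g v2 v4"
      proof (rule ess_cut[where C = "{v1, v2}"])
        show "\<forall>a\<in>{v1, v2}. \<forall>b'. nbr ?g a b' \<longrightarrow> b' \<in> {v1, v2} \<or> b' = v3" using dd by (auto simp: nb)
      qed (use dd N in auto)
      moreover have "joined ?g v2 v4" using joinedI[OF path3[OF e23 e34 pk]] .
      ultimately show ?thesis unfolding val_def by auto
    qed
    ultimately show ?thesis by simp
  qed
  have p123: "gpath ?g [v1, v2, v3] v1 v3" by (rule path3[OF e12 e23]) (use dd in simp)
  have p124: "gpath ?g' [v1, v2, v4] v1 v4" by (rule path3[OF nbr_sub[OF sub e12] e24]) (use dd in simp)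
  have cut1: "\<forall>a\<in>{v1}. \<forall>b'. nbr gg a b' \<longrightarrow> b' \<in> {v1} \<or> b' = v2" if "gg \<subseteq> ?g'" for gg
  proof (intro ballI allI impI)
    fix a b' assume "a \<in> {v1}" "nbr gg a b'"
    then have "nbr ?g' v1 b'" using nbr_sub[OF that] by simp
    then show "b' \<in> {v1} \<or> b' = v2" using dd by (simp add: nb nb')
  qed
  have e13: "ess N gg v1 v3 = {v2}" if gg: "?g \<subseteq> gg" "gg \<subseteq> ?g'" for gg
  proof -
    have "v2 \<in> ess N gg v1 v3"
      by (rule ess_cut[where C = "{v1}", OF _ _ _ _ _ _ cut1[OF gg(2)]]) (simp_all add: N dd)
    moreover have "v4 \<notin> ess N gg v1 v3" using ess_avoid[OF gpath_subset[OF p123 gg(1)]] dd by simp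
    moreover have "ess N gg v1 v3 \<subseteq> N - {v1, v3}" unfolding ess_def by auto
    ultimately show ?thesis using N dd by auto
  qed
  have dd13: "gdist gg v1 v3 = 2" "joined gg v1 v3" if gg: "?g \<subseteq> gg" "gg \<subseteq> ?g'" for gg
  proof -
    have "gpath gg [v1, v2, v3] v1 v3" using gpath_subset[OF p123 gg(1)] .
    then show "joined gg v1 v3" by (rule joinedI)
    have "\<not> nbr gg v1 v3" using n13' nbr_sub[OF gg(2)] by blast
    then show "gdist gg v1 v3 = 2" using gdist2[OF _ _ nbr_sub[OF gg(1) e12] nbr_sub[OF gg(1) e23]] dd by simp
  qed
  have I13: "iterm b gam N ?g' v2 (v1, v3) = iterm b gam N ?g v2 (v1, v3)"
    unfolding iterm_def using e13[OF subset_refl sub] e13[OF sub subset_refl]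
      dd13[OF subset_refl sub] dd13[OF sub subset_refl] by simp
  have I34: "iterm b gam N gg v2 (v3, v4) = 0" if gg: "?g \<subseteq> gg" for gg
  proof -
    have "nbr gg v3 v4" using nbr_sub[OF gg e34] .
    then show ?thesis unfolding iterm_def using ess_nbr by simp
  qed
  have I14g: "iterm b gam N ?g v2 (v1, v4) = gam * b 3"
  proof -
    have a2: "v2 \<in> ess N ?g v1 v4" by (rule ess_cut[where C = "{v1}", OF _ _ _ _ _ _ cut1[OF sub]]) (simp_all add: N dd)
    have a3: "v3 \<in> ess N ?g v1 v4"
    proof (rule ess_cut[where C = "{v1, v2}"])
      show "\<forall>a\<in>{v1, v2}. \<forall>b'. nbr ?g a b' \<longrightarrow> b' \<in> {v1, v2} \<or> b' = v3" using dd by (auto simp: nb)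
    qed (use dd N in auto)
    have "ess N ?g v1 v4 \<subseteq> N - {v1, v4}" unfolding ess_def by auto
    then have "ess N ?g v1 v4 = {v2, v3}" using a2 a3 N dd by auto
    moreover have "card {v2, v3} = 2" using d13 by simp
    moreover have "gdist ?g v1 v4 = 3"
    proof (rule gdist3[OF _ n14 _ e12 e23 e34])
      show "v1 \<noteq> v4" using dd by simp
      show "\<not> (\<exists>m. nbr ?g v1 m \<and> nbr ?g m v4)" using dd by (auto simp: nb)
    qed
    moreover have "joined ?g v1 v4" using joinedI[OF path4[OF e12 e23 e34]] dd by auto
    ultimately show ?thesis unfolding iterm_def using a2 by simp
  qed
  have I14g': "iterm b gam N ?g' v2 (v1, v4) = gam * 2 * b 2"
  proof -
    have a2: "v2 \<in> ess N ?g' v1 v4"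
      by (rule ess_cut[where C = "{v1}", OF _ _ _ _ _ _ cut1[OF subset_refl]]) (simp_all add: N dd)
    have "v3 \<notin> ess N ?g' v1 v4" using ess_avoid[OF p124] dd by simp
    moreover have "ess N ?g' v1 v4 \<subseteq> N - {v1, v4}" unfolding ess_def by auto
    ultimately have "ess N ?g' v1 v4 = {v2}" using a2 N dd by auto
    moreover have "gdist ?g' v1 v4 = 2" by (rule gdist2[OF _ n14' nbr_sub[OF sub e12] e24]) (use dd in simp)
    moreover have "joined ?g' v1 v4" using joinedI[OF p124] .
    ultimately show ?thesis unfolding iterm_def by simp
  qed
  let ?q0 = "(min v1 v4, max v1 v4)"
  have I: "(\<Sum>q\<in>PR N. iterm b gam N ?g' v2 q - iterm b gam N ?g v2 q) = gam * 2 * b 2 - gam * b 3"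
  proof -
    have "(\<Sum>q\<in>PR N. iterm b gam N ?g' v2 q - iterm b gam N ?g v2 q)
        = iterm b gam N ?g' v2 ?q0 - iterm b gam N ?g v2 ?q0"
    proof (rule sum_single_eq)
      show "finite (PR N)" by (rule PR_finite[OF fin])
      show "?q0 \<in> PR N" unfolding PR_def using N dd by (auto simp: min_def max_def)
      show "\<forall>q\<in>PR N. q \<noteq> ?q0 \<longrightarrow> iterm b gam N ?g' v2 q - iterm b gam N ?g v2 q = 0"
      proof (intro ballI impI)
        fix q assume q: "q \<in> PR N" "q \<noteq> ?q0"
        obtain a bb where ab: "q = (a, bb)" by (cases q)
        have abN: "a \<in> N" "bb \<in> N" "a < bb" using q ab unfolding PR_def by auto
        have not14: "\<not> ((a = v1 \<and> bb = v4) \<or> (a = v4 \<and> bb = v1))"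
          using q(2) ab abN(3) by (auto simp: min_def max_def)
        consider "a = v2 \<or> bb = v2" | "a = v1 \<and> bb = v3" | "a = v3 \<and> bb = v1" | "a = v3 \<and> bb = v4"
          | "a = v4 \<and> bb = v3"
          using abN not14 N by auto
        then show "iterm b gam N ?g' v2 q - iterm b gam N ?g v2 q = 0"
        proof cases
          case 1
          then have "v2 \<notin> ess N gg a bb" for gg using ess_endpoint[of v2 a bb] by auto
          then show ?thesis unfolding ab iterm_def by simp
        next
          case 2 then show ?thesis using I13 ab by simp
        next
          case 3 then show ?thesis using I13 ab iterm_sym[where a=v3 and bb=v1] by simp
        next
          case 4 then show ?thesis using I34[OF subset_refl] I34[OF sub] ab by simp
        next
          case 5 then show ?thesis using I34[OF subset_refl] I34[OF sub] ab iterm_sym[where a=v4 and bb=v3] by simp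
        qed
      qed
    qed
    moreover have "iterm b gam N gg v2 ?q0 = iterm b gam N gg v2 (v1, v4)" for gg
      using iterm_sym by (simp add: min_def max_def)
    ultimately show ?thesis using I14g I14g' by simp
  qed
  show ?thesis
    unfolding util_add_diff[OF fin E pN kN pk ng] V I by (simp add: algebra_simps)
qed

end


lemma ins_comm2: "insert {k, i} g = insert {i, k} g"
  by (simp add: insert_commute)

context prm
begin

lemma neg_bounds:
  assumes cl: "b 1 - b 2 + gam * (3 * b 2 - b 3) < c"
  shows "b 1 - c - b 2 + gam * b 2 < 0" "b 1 - b 2 - c + 2 * gam * (b 2 - b 3) < 0"
    "b 1 - c - b 2 + gam * (3 * b 2 - b 3) < 0"
proof -
  have b2: "0 < b 2" and b3: "0 < b 3" using b_pos' by auto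
  have "b (Suc 2) < b 2" using b_dec[rule_format, of 2] by simp
  then have b23: "b 3 < b 2" by simp
  have "gam * b 2 \<le> gam * (3 * b 2 - b 3)" using gam_nonneg b23 b3 by (intro mult_left_mono) auto
  then show "b 1 - c - b 2 + gam * b 2 < 0" using cl by linarith
  have "2 * gam * (b 2 - b 3) \<le> gam * (3 * b 2 - b 3)"
  proof -
    have "gam * (3 * b 2 - b 3) - 2 * gam * (b 2 - b 3) = gam * (b 2 + b 3)" by (simp add: algebra_simps)
    moreover have "0 \<le> gam * (b 2 + b 3)" using gam_nonneg b2 b3 by simp
    ultimately show ?thesis by linarith
  qed
  then show "b 1 - b 2 - c + 2 * gam * (b 2 - b 3) < 0" using cl by linarith
  show "b 1 - c - b 2 + gam * (3 * b 2 - b 3) < 0" using cl by linarith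
qed

lemma add_gain:
  assumes fin: "finite N" and E: "edges_in N g" and iN: "i \<in> N" and kN: "k \<in> N" and ik: "i \<noteq> k"
    and ng: "{i, k} \<notin> g" and nc: "\<not> (\<exists>m. nbr g i m \<and> nbr g m k)" and ch: "c < b 1 - b 3"
  shows "util b c gam N g i < util b c gam N (insert {i, k} g) i"
proof -
  have nn: "\<not> nbr g i k" using ng unfolding nbr_def by simp
  have "val b gam N g i k \<le> b 3"
  proof (cases "joined g i k")
    case True
    have "3 \<le> gdist g i k" by (rule gdist_ge3[OF True ik nn nc])
    then have "b (gdist g i k) \<le> b 3" using b_anti by simp
    then show ?thesis using val_le_b[OF ik[symmetric] True, of N] by simp
  next
    case False
    then show ?thesis unfolding val_def using b_pos'[of 3] by simp
  qed
  then show ?thesis using util_add_lb[OF fin iN kN ik ng E, where c = c] ch by simp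
qed

end

context gen
begin

lemma SS_gen:
  assumes cl: "b 1 - b 2 + gam * (3 * b 2 - b 3) < c"
    and SY: "S \<subseteq> Y" and Sne: "S \<noteq> {}" and iN: "i \<in> N" and kN: "k \<in> N" and ik: "i \<noteq> k"
    and side: "(i \<in> Y \<and> k \<in> Y) \<or> (i \<notin> Y \<and> k \<notin> Y)"
  shows "\<exists>p\<in>{i, k}. util b c gam N (insert {i, k} (GS Y Z x S)) p < util b c gam N (GS Y Z x S) p"
proof -
  note nb = neg_bounds[OF cl]
  show ?thesis
  proof (cases "i \<in> Y \<and> k \<in> Y")
    case True
    show ?thesis
    proof (cases "S = {i}")
      case Si: True
      have "util b c gam N (insert {i, k} (GS Y Z x S)) i - util b c gam N (GS Y Z x S) i
          = b 1 - b 2 - c + 2 * gam * (b 2 - b 3)"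
        unfolding Si by (rule t_exact) (use True ik in auto)
      then show ?thesis using nb(2) by auto
    next
      case Si: False
      show ?thesis
      proof (cases "S = {k}")
        case Sk: True
        have "util b c gam N (insert {k, i} (GS Y Z x S)) k - util b c gam N (GS Y Z x S) k
            = b 1 - b 2 - c + 2 * gam * (b 2 - b 3)"
          unfolding Sk by (rule t_exact) (use True ik in auto)
        then show ?thesis using nb(2) ins_comm2[of k i] by auto
      next
        case Sk: False
        show ?thesis
        proof (cases "i \<in> S \<or> k \<notin> S")
          case c1: True
          have "util b c gam N (insert {i, k} (GS Y Z x S)) i - util b c gam N (GS Y Z x S) i
              \<le> b 1 - c - b 2 + gam * b 2"
            by (rule Y_side_bound[OF SY Sne _ _ ik Si c1]) (use True in auto)
          then show ?thesis using nb(1) by auto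
        next
          case c2: False
          then have "k \<in> S \<or> i \<notin> S" by simp
          have "util b c gam N (insert {k, i} (GS Y Z x S)) k - util b c gam N (GS Y Z x S) k
              \<le> b 1 - c - b 2 + gam * b 2"
            by (rule Y_side_bound[OF SY Sne _ _ ik[symmetric] Sk]) (use True c2 in auto)
          then show ?thesis using nb(1) ins_comm2[of k i] by auto
        qed
      qed
    qed
  next
    case False
    then have nY: "i \<notin> Y" "k \<notin> Y" using side by auto
    then have iZ: "i \<in> insert x Z" and kZ: "k \<in> insert x Z" using iN kN Ndef by auto
    show ?thesis
    proof (cases "i \<in> Z")
      case True
      have "util b c gam N (insert {i, k} (GS Y Z x S)) i - util b c gam N (GS Y Z x S) i
          \<le> b 1 - c - b 2 + gam * b 2"
        by (rule Z_side_bound[OF SY Sne True kZ ik])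
      then show ?thesis using nb(1) by auto
    next
      case False
      then have "i = x" using iZ by simp
      then have kZ': "k \<in> Z" using kZ ik by simp
      have "util b c gam N (insert {k, i} (GS Y Z x S)) k - util b c gam N (GS Y Z x S) k
          \<le> b 1 - c - b 2 + gam * b 2"
        by (rule Z_side_bound[OF SY Sne kZ' iZ ik[symmetric]])
      then show ?thesis using nb(1) ins_comm2[of k i] by auto
    qed
  qed
qed

end


lemma sub2: "S \<subseteq> {t, u} \<Longrightarrow> S \<noteq> {} \<Longrightarrow> S = {t} \<or> S = {u} \<or> S = {t, u}"
  by auto

context fam
begin

lemma SS_11:
  assumes cl: "b 1 - b 2 + gam * (3 * b 2 - b 3) < c"
    and cY: "card Y = 1" and cZ: "card Z = 1"
    and SY: "S \<subseteq> Y" and Sne: "S \<noteq> {}" and iN: "i \<in> N" and kN: "k \<in> N" and ik: "i \<noteq> k"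
    and side: "(i \<in> Y \<and> k \<in> Y) \<or> (i \<notin> Y \<and> k \<notin> Y)"
  shows "\<exists>p\<in>{i, k}. util b c gam N (insert {i, k} (GS Y Z x S)) p < util b c gam N (GS Y Z x S) p"
proof -
  obtain t where Y: "Y = {t}" using cY by (rule card_1_singletonE)
  obtain a where Z: "Z = {a}" using cZ by (rule card_1_singletonE)
  have S: "S = {t}" using SY Sne Y by auto
  have at: "a \<noteq> t" using Y Z YZ by auto
  have ax: "a \<noteq> x" using Z xZ by auto
  have tx: "t \<noteq> x" using Y xY by auto
  have d: "distinct [a, t, x]" using at ax tx by simp
  have NN: "N = {a, t, x}" using Ndef Y Z by auto
  have G: "GS Y Z x S = {{a, t}, {t, x}}" unfolding GS_def Y Z S by (auto simp: insert_commute)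
  have ik': "{i, k} = {a, x}" using side iN kN ik Y NN by auto
  have "util b c gam N (insert {a, x} {{a, t}, {t, x}}) a - util b c gam N {{a, t}, {t, x}} a
      \<le> b 1 - c - b 2 + gam * b 2" by (rule small_P3[OF d NN])
  then have "util b c gam N (insert {i, k} (GS Y Z x S)) a < util b c gam N (GS Y Z x S) a"
    using neg_bounds(1)[OF cl] unfolding G ik' by simp
  moreover have "a \<in> {i, k}" using ik' by auto
  ultimately show ?thesis by blast
qed

lemma SS_21_single:
  assumes cl: "b 1 - b 2 + gam * (3 * b 2 - b 3) < c"
    and Y: "Y = {t, u}" and tu: "t \<noteq> u" and Z: "Z = {a}" and S: "S = {t}"
    and iN: "i \<in> N" and kN: "k \<in> N" and ik: "i \<noteq> k"
    and side: "(i \<in> Y \<and> k \<in> Y) \<or> (i \<notin> Y \<and> k \<notin> Y)"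
  shows "\<exists>p\<in>{i, k}. util b c gam N (insert {i, k} (GS Y Z x S)) p < util b c gam N (GS Y Z x S) p"
proof -
  have at: "a \<noteq> t" "a \<noteq> u" using Y Z YZ by auto
  have ax: "a \<noteq> x" using Z xZ by auto
  have tx: "t \<noteq> x" "u \<noteq> x" using Y xY by auto
  have NN: "N = {t, u, a, x}" using Ndef Y Z by auto
  have G: "GS Y Z x S = {{x, t}, {t, a}, {a, u}}" unfolding GS_def Y Z S by (auto simp: insert_commute)
  note nb = neg_bounds(3)[OF cl]
  consider "{i, k} = {t, u}" | "{i, k} = {a, x}" using side iN kN ik Y NN at ax tx by auto
  then show ?thesis
  proof cases
    case 1
    have d: "distinct [x, t, a, u]" using at ax tx tu by auto
    have "util b c gam N (insert {t, u} {{x, t}, {t, a}, {a, u}}) t - util b c gam N {{x, t}, {t, a}, {a, u}} t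
      = b 1 - c - b 2 + gam * (3 * b 2 - b 3)" by (rule small_P4[OF d]) (use NN in auto)
    then have "util b c gam N (insert {i, k} (GS Y Z x S)) t < util b c gam N (GS Y Z x S) t"
      using nb unfolding G 1 by simp
    moreover have "t \<in> {i, k}" using 1 by auto
    ultimately show ?thesis by blast
  next
    case 2
    have d: "distinct [u, a, t, x]" using at ax tx tu by auto
    have G': "{{u, a}, {a, t}, {t, x}} = {{x, t}, {t, a}, {a, u}}" by (auto simp: insert_commute)
    have "util b c gam N (insert {a, x} {{u, a}, {a, t}, {t, x}}) a - util b c gam N {{u, a}, {a, t}, {t, x}} a
      = b 1 - c - b 2 + gam * (3 * b 2 - b 3)" by (rule small_P4[OF d]) (use NN in auto)
    then have "util b c gam N (insert {i, k} (GS Y Z x S)) a < util b c gam N (GS Y Z x S) a"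
      using nb unfolding G 2 G' by simp
    moreover have "a \<in> {i, k}" using 2 by auto
    ultimately show ?thesis by blast
  qed
qed

lemma SS_21_both:
  assumes cl: "b 1 - b 2 + gam * (3 * b 2 - b 3) < c"
    and Y: "Y = {t, u}" and tu: "t \<noteq> u" and Z: "Z = {a}" and S: "S = {t, u}"
    and iN: "i \<in> N" and kN: "k \<in> N" and ik: "i \<noteq> k"
    and side: "(i \<in> Y \<and> k \<in> Y) \<or> (i \<notin> Y \<and> k \<notin> Y)"
  shows "\<exists>p\<in>{i, k}. util b c gam N (insert {i, k} (GS Y Z x S)) p < util b c gam N (GS Y Z x S) p"
proof -
  have at: "a \<noteq> t" "a \<noteq> u" using Y Z YZ by auto
  have ax: "a \<noteq> x" using Z xZ by auto
  have tx: "t \<noteq> x" "u \<noteq> x" using Y xY by auto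
  have NN: "N = {t, u, a, x}" using Ndef Y Z by auto
  have G: "GS Y Z x S = {{t, a}, {a, u}, {u, x}, {x, t}}" unfolding GS_def Y Z S by (auto simp: insert_commute)
  note nb = neg_bounds(1)[OF cl]
  consider "{i, k} = {t, u}" | "{i, k} = {a, x}" using side iN kN ik Y NN at ax tx by auto
  then show ?thesis
  proof cases
    case 1
    have d: "distinct [t, a, u, x]" using at ax tx tu by auto
    have "util b c gam N (insert {t, u} {{t, a}, {a, u}, {u, x}, {x, t}}) t - util b c gam N {{t, a}, {a, u}, {u, x}, {x, t}} t
      \<le> b 1 - c - b 2 + gam * b 2" by (rule small_C4[OF d]) (use NN in auto)
    then have "util b c gam N (insert {i, k} (GS Y Z x S)) t < util b c gam N (GS Y Z x S) t"
      using nb unfolding G 1 by simp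
    moreover have "t \<in> {i, k}" using 1 by auto
    ultimately show ?thesis by blast
  next
    case 2
    have d: "distinct [a, u, x, t]" using at ax tx tu by auto
    have G': "{{a, u}, {u, x}, {x, t}, {t, a}} = {{t, a}, {a, u}, {u, x}, {x, t}}" by (auto simp: insert_commute)
    have "util b c gam N (insert {a, x} {{a, u}, {u, x}, {x, t}, {t, a}}) a - util b c gam N {{a, u}, {u, x}, {x, t}, {t, a}} a
      \<le> b 1 - c - b 2 + gam * b 2" by (rule small_C4[OF d]) (use NN in auto)
    then have "util b c gam N (insert {i, k} (GS Y Z x S)) a < util b c gam N (GS Y Z x S) a"
      using nb unfolding G 2 G' by simp
    moreover have "a \<in> {i, k}" using 2 by auto
    ultimately show ?thesis by blast
  qed
qed

definition SC :: bool where
  "SC \<longleftrightarrow> (card Y = 1 \<and> card Z = 0) \<or> (card Y = 1 \<and> card Z = 1) \<or> (card Y = 2 \<and> card Z = 1)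
     \<or> (2 \<le> card Y \<and> 2 \<le> card Z)"

lemma SS:
  assumes cl: "b 1 - b 2 + gam * (3 * b 2 - b 3) < c" and sc: SC
    and SY: "S \<subseteq> Y" and Sne: "S \<noteq> {}" and iN: "i \<in> N" and kN: "k \<in> N" and ik: "i \<noteq> k"
    and side: "(i \<in> Y \<and> k \<in> Y) \<or> (i \<notin> Y \<and> k \<notin> Y)"
  shows "\<exists>p\<in>{i, k}. util b c gam N (insert {i, k} (GS Y Z x S)) p < util b c gam N (GS Y Z x S) p"
proof -
  consider "card Y = 1" "card Z = 0" | "card Y = 1" "card Z = 1" | "card Y = 2" "card Z = 1"
    | "2 \<le> card Y" "2 \<le> card Z" using sc unfolding SC_def by argo
  then show ?thesis
  proof cases
    case 1
    obtain t where Y: "Y = {t}" using 1(1) by (rule card_1_singletonE)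
    have "Z = {}" using 1(2) finZ by simp
    then have "N = {t, x}" using Ndef Y by auto
    then have False using side iN kN ik Y by auto
    then show ?thesis ..
  next
    case 2 then show ?thesis using SS_11[OF cl _ _ SY Sne iN kN ik side] by blast
  next
    case 3
    obtain t u where Y: "Y = {t, u}" and tu: "t \<noteq> u" using 3(1) unfolding card_2_iff by blast
    obtain a where Z: "Z = {a}" using 3(2) by (rule card_1_singletonE)
    have "S = {t} \<or> S = {u} \<or> S = {t, u}" using sub2[of S t u] SY Sne Y by simp
    then consider "S = {t}" | "S = {u}" | "S = {t, u}" by argo
    then show ?thesis
    proof cases
      case 1 then show ?thesis using SS_21_single[OF cl Y tu Z _ iN kN ik side] by blast
    next
      case 2
      have Y': "Y = {u, t}" using Y by auto
      show ?thesis using SS_21_single[OF cl Y' tu[symmetric] Z 2 iN kN ik side] .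
    next
      case 3 then show ?thesis using SS_21_both[OF cl Y tu Z _ iN kN ik side] by blast
    qed
  next
    case 4
    interpret G: gen b gam Y Z x N by unfold_locales (use 4 in auto)
    show ?thesis by (rule G.SS_gen[OF cl SY Sne iN kN ik side])
  qed
qed

end


context fam
begin

lemma nbr_in: "nbr g a bb \<Longrightarrow> {a, bb} \<in> g"
  unfolding nbr_def by simp

lemma move_GS:
  assumes cl: "b 1 - b 2 + gam * (3 * b 2 - b 3) < c" and ch: "c < b 1 - b 3" and sc: SC
    and SY: "S \<subseteq> Y" and Sne: "S \<noteq> {}" and mv: "move b c gam N (GS Y Z x S) g'"
  shows "\<exists>u\<in>Y-S. g' = GS Y Z x (insert u S)"
proof -
  let ?G = "GS Y Z x S"
  note nb = nbr_GS[OF SY]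
  obtain i where iN: "i \<in> N" and opt: "g' \<in> options b c gam N ?G i"
    and gain: "util b c gam N g' i > util b c gam N ?G i"
    using mv unfolding move_def by blast
  from opt consider (add) k where "g' = insert {i, k} ?G" "k \<in> N" "k \<noteq> i" "{i, k} \<notin> ?G"
      "util b c gam N (insert {i, k} ?G) k \<ge> util b c gam N ?G k"
    | (del) k where "g' = ?G - {{i, k}}" "nbr ?G i k"
    unfolding options_def by blast
  then show ?thesis
  proof cases
    case del
    have "util b c gam N g' i < util b c gam N ?G i"
      unfolding del(1) by (rule util_del_bip[OF finN iN edges_GS[OF SY] del(2) bip_GS[OF SY] ch])
    then show ?thesis using gain by simp
  next
    case add
    show ?thesis
    proof (cases "(i \<in> Y \<and> k \<in> Y) \<or> (i \<notin> Y \<and> k \<notin> Y)")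
      case True
      obtain p where p: "p \<in> {i, k}" "util b c gam N (insert {i, k} ?G) p < util b c gam N ?G p"
        using SS[OF cl sc SY Sne iN add(2) add(3)[symmetric] True] by blast
      then show ?thesis using gain add(1) add(5) by auto
    next
      case False
      then consider "i \<in> Y" "k \<notin> Y" | "i \<notin> Y" "k \<in> Y" by blast
      then show ?thesis
      proof cases
        case 1
        have kZ: "k \<notin> Z"
        proof
          assume "k \<in> Z"
          then have "nbr ?G i k" by (simp add: nb 1)
          then show False using add(4) nbr_in by blast
        qed
        then have kx: "k = x" using add(2) 1 Ndef by auto
        have iS: "i \<notin> S"
        proof
          assume "i \<in> S"
          then have "nbr ?G i k" by (simp add: nb kx)
          then show False using add(4) nbr_in by blast
        qed
        have "g' = GS Y Z x (insert i S)" unfolding add(1) GS_insert kx by (simp add: insert_commute)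
        then show ?thesis using 1 iS by blast
      next
        case 2
        have iZ: "i \<notin> Z"
        proof
          assume "i \<in> Z"
          then have "nbr ?G i k" by (simp add: nb 2)
          then show False using add(4) nbr_in by blast
        qed
        then have ix: "i = x" using iN 2 Ndef by auto
        have kS: "k \<notin> S"
        proof
          assume "k \<in> S"
          then have "nbr ?G i k" by (simp add: nb ix)
          then show False using add(4) nbr_in by blast
        qed
        have "g' = GS Y Z x (insert k S)" unfolding add(1) GS_insert ix by simp
        then show ?thesis using 2 kS by blast
      qed
    qed
  qed
qed

lemma ps_GS:
  assumes ch: "c < b 1 - b 3" and SY: "S \<subseteq> Y" and Sne: "S \<noteq> {}"
    and ps: "pairwise_stable b c gam N (GS Y Z x S)"
  shows "S = Y"
proof (rule ccontr)
  assume "S \<noteq> Y"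
  then obtain u where u: "u \<in> Y" "u \<notin> S" using SY by blast
  let ?G = "GS Y Z x S"
  note nb = nbr_GS[OF SY]
  have xN: "x \<in> N" and uN: "u \<in> N" using Ndef u by auto
  have xu: "x \<noteq> u" using u xY by auto
  have nxu: "\<not> nbr ?G x u" using xu by (simp add: nb u xY xZ)
  have ng: "{x, u} \<notin> ?G" by (rule notin_of_nbr[OF xu nxu])
  have ng': "{u, x} \<notin> ?G" using ng by (simp add: insert_commute)
  have nc: "\<not> (\<exists>m. nbr ?G x m \<and> nbr ?G m u)"
  proof
    assume "\<exists>m. nbr ?G x m \<and> nbr ?G m u"
    then obtain m where m: "nbr ?G x m" "nbr ?G m u" by blast
    have "m \<in> S" using m(1) xY xZ SY by (auto simp add: nb)
    then have "m \<in> Y" "m \<noteq> x" using SY xY by auto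
    then show False using m(2) u YZ xY by (auto simp: nb)
  qed
  have nc': "\<not> (\<exists>m. nbr ?G u m \<and> nbr ?G m x)" using nc nbr_sym by metis
  have g1: "util b c gam N ?G x < util b c gam N (insert {x, u} ?G) x"
    by (rule add_gain[OF finN edges_GS[OF SY] xN uN xu ng nc ch])
  have g2: "util b c gam N ?G u < util b c gam N (insert {u, x} ?G) u"
    by (rule add_gain[OF finN edges_GS[OF SY] uN xN xu[symmetric] ng' nc' ch])
  have "util b c gam N (insert {x, u} ?G) u < util b c gam N ?G u"
    using ps xN uN xu ng g1 unfolding pairwise_stable_def by blast
  then show False using g2 by (simp add: insert_commute)
qed

lemma reach_GS:
  assumes cl: "b 1 - b 2 + gam * (3 * b 2 - b 3) < c" and ch: "c < b 1 - b 3" and sc: SC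
  shows "(move b c gam N)\<^sup>*\<^sup>* (GS Y Z x S0) g' \<Longrightarrow> S0 \<subseteq> Y \<Longrightarrow> S0 \<noteq> {} \<Longrightarrow>
    \<exists>S. S0 \<subseteq> S \<and> S \<subseteq> Y \<and> g' = GS Y Z x S"
proof (induction rule: rtranclp_induct)
  case base
  then show ?case by blast
next
  case (step g1 g2)
  then obtain S where S: "S0 \<subseteq> S" "S \<subseteq> Y" "g1 = GS Y Z x S" by blast
  then have "S \<noteq> {}" using step.prems by blast
  then obtain u where "u \<in> Y - S" "g2 = GS Y Z x (insert u S)"
    using move_GS[OF cl ch sc S(2)] step.hyps(2) S(3) by blast
  then show ?case using S by blast
qed

end


context fam
begin

lemma path_noX:
  assumes Yne: "Y \<noteq> {}" and Zne: "Z \<noteq> {}" and SY: "S \<subseteq> Y"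
    and a: "a \<in> Y \<union> Z" and bb: "bb \<in> Y \<union> Z" and abb: "a \<noteq> bb"
  shows "\<exists>xs. gpath (GS Y Z x S) xs a bb \<and> x \<notin> set xs"
proof -
  let ?g = "GS Y Z x S"
  note nb = nbr_GS[OF SY]
  obtain y where y: "y \<in> Y" using Yne by blast
  obtain z where z: "z \<in> Z" using Zne by blast
  have xa: "x \<noteq> a" "x \<noteq> bb" "x \<noteq> y" "x \<noteq> z" using a bb y z xY xZ by auto
  consider "a \<in> Y" "bb \<in> Z" | "a \<in> Z" "bb \<in> Y" | "a \<in> Y" "bb \<in> Y" | "a \<in> Z" "bb \<in> Z" using a bb by blast
  then show ?thesis
  proof cases
    case 1
    have "gpath ?g [a, bb] a bb" by (rule path2) (simp add: nb 1)
    then show ?thesis using xa by (intro exI[of _ "[a, bb]"]) simp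
  next
    case 2
    have "gpath ?g [a, bb] a bb" by (rule path2) (simp add: nb 2)
    then show ?thesis using xa by (intro exI[of _ "[a, bb]"]) simp
  next
    case 3
    have "gpath ?g [a, z, bb] a bb" by (rule path3) (simp_all add: nb 3 z abb)
    then show ?thesis using xa by (intro exI[of _ "[a, z, bb]"]) simp
  next
    case 4
    have "gpath ?g [a, y, bb] a bb" by (rule path3) (simp_all add: nb 4 y abb)
    then show ?thesis using xa by (intro exI[of _ "[a, y, bb]"]) simp
  qed
qed

lemma util_x_entry:
  assumes Yne: "Y \<noteq> {}" and Zne: "Z \<noteq> {}" and t: "t \<in> Y"
  shows "util b c gam N (GS Y Z x {t}) x
     = b 1 - c + (1 - gam) * (real (card Z) * b 2 + (real (card Y) - 1) * b 3)"
proof -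
  let ?g = "GS Y Z x {t}"
  have SY: "{t} \<subseteq> Y" using t by simp
  note nb = nbr_GS[OF SY]
  have E: "edges_in N ?g" by (rule edges_GS[OF SY])
  have xN: "x \<in> N" using Ndef by simp
  have tZ: "t \<notin> Z" using t YZ by blast
  have tx: "t \<noteq> x" using t xY by blast
  obtain z where z: "z \<in> Z" using Zne by blast
  have onlyx: "nbr ?g x m \<longleftrightarrow> m = t" for m using xY xZ by (auto simp: nb)
  have xt: "nbr ?g x t" using onlyx by simp
  have "{m. nbr ?g x m} = {t}" using onlyx by blast
  then have deg: "degree ?g x = 1" unfolding degree_def by simp
  have it: "(\<Sum>q\<in>PR N. iterm b gam N ?g x q) = 0"
  proof (rule sum.neutral, rule ballI)
    fix q assume q: "q \<in> PR N"
    obtain a bb where ab: "q = (a, bb)" "a \<in> N" "bb \<in> N" "a < bb" "a \<noteq> x" by (rule PR_cases[OF q])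
    have "x \<notin> ess N ?g a bb"
    proof (cases "bb = x")
      case True then show ?thesis by (simp add: ess_endpoint)
    next
      case False
      then have "a \<in> Y \<union> Z" "bb \<in> Y \<union> Z" using ab Ndef by auto
      then obtain xs where "gpath ?g xs a bb" "x \<notin> set xs"
        using path_noX[OF Yne Zne SY] ab(4) by blast
      then show ?thesis by (rule ess_avoid)
    qed
    then show "iterm b gam N ?g x q = 0" unfolding iterm_def ab(1) by simp
  qed
  have cutt: "t \<in> ess N ?g x w" if "w \<in> Y \<union> Z" "w \<noteq> t" for w
  proof (rule ess_cut[where C = "{x}"])
    show "\<forall>a\<in>{x}. \<forall>b'. nbr ?g a b' \<longrightarrow> b' \<in> {x} \<or> b' = t" using onlyx by simp
  qed (use that t tx Ndef xY xZ in auto)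
  have vZ: "val b gam N ?g x w = (1 - gam) * b 2" if w: "w \<in> Z" for w
  proof -
    have wt: "w \<noteq> t" using w tZ by blast
    have wx: "x \<noteq> w" using w xZ by blast
    have n1: "\<not> nbr ?g x w" using onlyx wt by simp
    have tw: "nbr ?g t w" by (simp add: nb t w)
    have "gdist ?g x w = 2" by (rule gdist2[OF wx n1 xt tw])
    moreover have "joined ?g x w" by (rule joinedI[OF path3[OF xt tw wx]])
    moreover have "ess N ?g x w \<noteq> {}" using cutt[of w] w wt by auto
    ultimately show ?thesis unfolding val_def by simp
  qed
  have vY: "val b gam N ?g x w = (1 - gam) * b 3" if w: "w \<in> Y" "w \<noteq> t" for w
  proof -
    have wx: "x \<noteq> w" using w xY by blast
    have n1: "\<not> nbr ?g x w" using onlyx w by simp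
    have nc: "\<not> (\<exists>m. nbr ?g x m \<and> nbr ?g m w)"
    proof
      assume "\<exists>m. nbr ?g x m \<and> nbr ?g m w"
      then obtain m where "nbr ?g x m" "nbr ?g m w" by blast
      then have "nbr ?g t w" using onlyx by simp
      then show False using t w tZ YZ xY by (auto simp: nb)
    qed
    have tz: "nbr ?g t z" by (simp add: nb t z)
    have zw: "nbr ?g z w" by (simp add: nb z w)
    have tw: "t \<noteq> w" using w by simp
    have zx: "x \<noteq> z" using z xZ by blast
    have "gdist ?g x w = 3" by (rule gdist3[OF wx n1 nc xt tz zw])
    moreover have "joined ?g x w" by (rule joinedI[OF path4[OF xt tz zw wx zx tw]])
    moreover have "ess N ?g x w \<noteq> {}" using cutt[of w] w by auto
    ultimately show ?thesis unfolding val_def by simp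
  qed
  have NX: "N - {x} = Y \<union> Z" using Ndef xY xZ by auto
  have sums: "(\<Sum>w\<in>N-{x}. val b gam N ?g x w) = b 1 + (real (card Y) - 1) * ((1 - gam) * b 3)
      + real (card Z) * ((1 - gam) * b 2)"
  proof -
    have "(\<Sum>w\<in>N-{x}. val b gam N ?g x w) = (\<Sum>w\<in>Y. val b gam N ?g x w) + (\<Sum>w\<in>Z. val b gam N ?g x w)"
      unfolding NX by (rule sum.union_disjoint[OF finY finZ YZ])
    moreover have "(\<Sum>w\<in>Z. val b gam N ?g x w) = real (card Z) * ((1 - gam) * b 2)"
      using vZ by simp
    moreover have "(\<Sum>w\<in>Y. val b gam N ?g x w) = b 1 + (real (card Y) - 1) * ((1 - gam) * b 3)"
    proof -
      have "(\<Sum>w\<in>Y. val b gam N ?g x w) = val b gam N ?g x t + (\<Sum>w\<in>Y-{t}. val b gam N ?g x w)"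
        by (rule sum.remove[OF finY t])
      moreover have "val b gam N ?g x t = b 1" by (rule val_nbr[OF xt])
      moreover have "(\<Sum>w\<in>Y-{t}. val b gam N ?g x w) = real (card (Y - {t})) * ((1 - gam) * b 3)"
        using vY by simp
      moreover have "real (card (Y - {t})) = real (card Y) - 1"
      proof -
        have "0 < card Y" using t finY card_gt_0_iff by blast
        then show ?thesis using t finY by (simp add: card_Diff_singleton of_nat_diff)
      qed
      ultimately show ?thesis by simp
    qed
    ultimately show ?thesis by simp
  qed
  show ?thesis unfolding util_decomp[OF finN xN E] deg it sums by (simp add: algebra_simps)
qed

lemma degree_K:
  assumes t: "t \<in> Y"
  shows "degree (GS Y Z x {}) t = card Z"
proof -
  have "{k. nbr (GS Y Z x {}) t k} = Z" using t YZ xY xZ by (auto simp: nbr_GS)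
  then show ?thesis unfolding degree_def by simp
qed

lemma accepts_K:
  assumes t: "t \<in> Y" and ch: "c < b 1 - b 3"
  shows "util b c gam N (GS Y Z x {}) t < util b c gam N (insert {x, t} (GS Y Z x {})) t"
proof -
  have E: "edges_in N (GS Y Z x {})" by (rule edges_GS) simp
  have tN: "t \<in> N" and xN: "x \<in> N" using t Ndef by auto
  have tx: "t \<noteq> x" using t xY by blast
  have nx: "\<not> nbr (GS Y Z x {}) m x" for m using xY xZ by (simp add: nbr_GS)
  have ng: "{t, x} \<notin> GS Y Z x {}" using notin_of_nbr[OF tx nx] .
  have "util b c gam N (GS Y Z x {}) t < util b c gam N (insert {t, x} (GS Y Z x {})) t"
    by (rule add_gain[OF finN E tN xN tx ng _ ch]) (use nx in blast)
  then show ?thesis by (simp add: insert_commute)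
qed

end


lemma fam_part:
  assumes P: "prm b gam" and Y: "Y \<subseteq> {0..<n}"
  shows "fam b gam Y ({0..<n} - Y) n {0..<Suc n}"
proof -
  have "fam_axioms Y ({0..<n} - Y) n {0..<Suc n}"
  proof
    show "Y \<inter> ({0..<n} - Y) = {}" by blast
    show "n \<notin> Y" using Y by auto
    show "n \<notin> {0..<n} - Y" by simp
    show "{0..<Suc n} = insert n (Y \<union> ({0..<n} - Y))" using Y by auto
    show "finite {0..<Suc n}" by simp
    show "\<forall>a\<in>Y \<union> ({0..<n} - Y). a < n" using Y by auto
  qed
  then show ?thesis using P by (simp add: fam_def)
qed

lemma turan_GS:
  assumes A: "A \<subseteq> {0..<n}"
  shows "{{x, y} | x y. x \<in> A \<and> y \<in> {0..<n} - A} = GS A ({0..<n} - A) n {}"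
    and "{{x, y} | x y. x \<in> A \<and> y \<in> {0..<n} - A} = GS ({0..<n} - A) ({0..<n} - ({0..<n} - A)) n {}"
proof -
  show "{{x, y} | x y. x \<in> A \<and> y \<in> {0..<n} - A} = GS A ({0..<n} - A) n {}"
    unfolding GS_def by simp
  have e: "{0..<n} - ({0..<n} - A) = A" using A by auto
  show "{{x, y} | x y. x \<in> A \<and> y \<in> {0..<n} - A} = GS ({0..<n} - A) ({0..<n} - ({0..<n} - A)) n {}"
    unfolding GS_def e by (auto simp: insert_commute)
qed

lemma final_GS:
  assumes Y: "Y \<subseteq> {0..<n}"
  shows "GS Y ({0..<n} - Y) n Y = {{x, y} | x y. x \<in> Y \<and> y \<in> {0..<Suc n} - Y}"
proof -
  have "{0..<Suc n} - Y = insert n ({0..<n} - Y)" using Y by auto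
  then show ?thesis unfolding GS_def by (auto simp: insert_commute)
qed

lemma half_facts:
  fixes n :: nat
  shows "even n \<Longrightarrow> n - n div 2 = n div 2 \<and> Suc n div 2 = n div 2"
    and "odd n \<Longrightarrow> n - n div 2 = Suc (n div 2) \<and> Suc n div 2 = Suc (n div 2)"
  by (auto elim!: evenE oddE)

context prm
begin

lemma main_step:
  assumes cl: "b 1 - b 2 + gam * (3 * b 2 - b 3) < c" and ch: "c < b 1 - b 3"
    and c0l: "(1 - gam) * (b 2 - b 3) < c0"
    and n1: "1 \<le> n" and bt: "bipartite_turan n g"
    and ec: "entry_choice b c gam c0 n g t"
    and mv: "(move b c gam {0..<Suc n})\<^sup>*\<^sup>* (insert {n, t} g) g'"
    and ps: "pairwise_stable b c gam {0..<Suc n} g'"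
  shows "bipartite_turan (Suc n) g'"
proof -
  have P: "prm b gam" by (rule prm_axioms)
  obtain A where A: "A \<subseteq> {0..<n}" "card A = n div 2" and g: "g = {{x, y} | x y. x \<in> A \<and> y \<in> {0..<n} - A}"
    using bt unfolding bipartite_turan_def by blast
  let ?B = "{0..<n} - A"
  let ?N = "{0..<Suc n}"
  have cB: "card ?B = n - n div 2" using A by (simp add: card_Diff_subset finite_subset)
  have tn: "t < n" and acc: "accepts b c gam n g t"
    and maxi: "\<forall>t' < n. accepts b c gam n g t' \<longrightarrow> entry_util b c gam c0 n g t' \<le> entry_util b c gam c0 n g t"
    using ec unfolding entry_choice_def by auto
  have odd_case: "t \<notin> A" if on: "odd n"
  proof
    assume tA: "t \<in> A"
    have hf: "n - n div 2 = Suc (n div 2)" using half_facts(2)[OF on] by simp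
    have cB': "card ?B = Suc (card A)" using cB hf A(2) by simp
    then obtain t' where t': "t' \<in> ?B" by (metis card.empty card_eq_0_iff nat.distinct(1) ex_in_conv)
    have Ane: "A \<noteq> {}" using tA by blast
    have Bne: "?B \<noteq> {}" using t' by blast
    interpret FA: fam b gam A ?B n ?N by (rule fam_part[OF P A(1)])
    have Bsub: "?B \<subseteq> {0..<n}" by blast
    have eB: "{0..<n} - ?B = A" using A(1) by auto
    interpret FB: fam b gam ?B A n ?N using fam_part[OF P Bsub] unfolding eB .
    have gA: "g = GS A ?B n {}" using turan_GS(1)[OF A(1)] g by simp
    have gB: "g = GS ?B A n {}" using turan_GS(2)[OF A(1)] g unfolding eB by simp
    have t'n: "t' < n" using t' by simp
    have acc': "accepts b c gam n g t'"
      unfolding accepts_def using FB.accepts_K[OF t' ch] gB by simp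
    have Et: "entry_util b c gam c0 n g t = - c0 * real (card ?B)
        + (b 1 - c + (1 - gam) * (real (card ?B) * b 2 + (real (card A) - 1) * b 3))"
      unfolding entry_util_def gA FA.GS_insert[of t "{}", symmetric] FA.degree_K[OF tA] FA.util_x_entry[OF Ane Bne tA] ..
    have Et': "entry_util b c gam c0 n g t' = - c0 * real (card A)
        + (b 1 - c + (1 - gam) * (real (card A) * b 2 + (real (card ?B) - 1) * b 3))"
      unfolding entry_util_def gB FB.GS_insert[of t' "{}", symmetric] FB.degree_K[OF t'] FB.util_x_entry[OF Bne Ane t'] ..
    have "entry_util b c gam c0 n g t' \<le> entry_util b c gam c0 n g t" using maxi t'n acc' by blast
    moreover have "entry_util b c gam c0 n g t - entry_util b c gam c0 n g t' = (1 - gam) * (b 2 - b 3) - c0"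
      unfolding Et Et' cB' by (simp add: algebra_simps)
    ultimately have "c0 \<le> (1 - gam) * (b 2 - b 3)" by simp
    then show False using c0l by simp
  qed
  define Y where "Y = (if t \<in> A then A else ?B)"
  let ?Z = "{0..<n} - Y"
  have tY: "t \<in> Y" unfolding Y_def using tn by auto
  have Ysub: "Y \<subseteq> {0..<n}" unfolding Y_def using A(1) by auto
  interpret F: fam b gam Y ?Z n ?N by (rule fam_part[OF P Ysub])
  have gY: "g = GS Y ?Z n {}"
  proof (cases "t \<in> A")
    case True then show ?thesis unfolding Y_def using turan_GS(1)[OF A(1)] g by simp
  next
    case False then show ?thesis unfolding Y_def using turan_GS(2)[OF A(1)] g by simp
  qed
  have "card Y \<le> n" using card_mono[OF _ Ysub] by simp
  then have cYZ: "card Y + card ?Z = n" using Ysub by (simp add: card_Diff_subset finite_subset)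
  have cY: "card Y = Suc n div 2 \<and> card ?Z + 1 \<ge> card Y \<and> card Y \<ge> card ?Z"
  proof (cases "even n")
    case True
    have "card A = n div 2" "card ?B = n div 2" using A(2) cB half_facts(1)[OF True] by auto
    then have "card Y = n div 2" unfolding Y_def by simp
    then show ?thesis using cYZ half_facts(1)[OF True] by arith
  next
    case False
    then have "t \<notin> A" using odd_case by blast
    then have "Y = ?B" unfolding Y_def by simp
    then have "card Y = Suc (n div 2)" using cB half_facts(2)[OF False] by simp
    then show ?thesis using cYZ half_facts(2)[OF False] by arith
  qed
  have cY1: "1 \<le> card Y" using tY F.finY card_gt_0_iff by (metis One_nat_def Suc_leI empty_iff)
  have sc: F.SC unfolding F.SC_def using cY cY1 by linarith
  have "(move b c gam ?N)\<^sup>*\<^sup>* (GS Y ?Z n {t}) g'" using mv unfolding gY F.GS_insert[of t "{}", symmetric] .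
  then obtain S where S: "{t} \<subseteq> S" "S \<subseteq> Y" "g' = GS Y ?Z n S"
    using F.reach_GS[OF cl ch sc] tY by blast
  have "S = Y" using F.ps_GS[OF ch S(2)] S(1) ps S(3) by blast
  then have "g' = {{x, y} | x y. x \<in> Y \<and> y \<in> ?N - Y}" using S(3) final_GS[OF Ysub] by simp
  moreover have "Y \<subseteq> ?N" using Ysub by auto
  ultimately show ?thesis unfolding bipartite_turan_def using cY by blast
qed

end



theorem theorem3:
  fixes b :: "nat \<Rightarrow> real" and c gam c0 :: real
  assumes b_pos: "\<forall>i \<ge> 1. 0 < b i"
    and b_dec: "\<forall>i \<ge> 1. b (Suc i) < b i"
    and gam_nonneg: "0 \<le> gam" and gam_lt1: "gam < 1"
    and gam_small: "gam < (b 2 - b 3) / (3 * b 2 - b 3)"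
    and c_low: "b 1 - b 2 + gam * (3 * b 2 - b 3) < c"
    and c_high: "c < b 1 - b 3"
    and c0_low: "(1 - gam) * (b 2 - b 3) < c0"
    and c0_high: "c0 \<le> (1 - gam) * b 2"
  shows "\<forall>n \<ge> 1. \<forall>g. reached b c gam c0 n g \<longrightarrow> bipartite_turan n g"
proof -
  interpret prm b gam by unfold_locales (use b_pos b_dec gam_nonneg gam_lt1 in auto)
  have "1 \<le> n \<and> bipartite_turan n g" if "reached b c gam c0 n g" for n g
    using that
  proof (induction rule: reached.induct)
    case start
    have "{} = {{x, y} | x y. x \<in> ({}::nat set) \<and> y \<in> {0..<1} - {}}" by simp
    then show ?case unfolding bipartite_turan_def by (intro conjI le_refl exI[of _ "{}"]) auto
  next
    case (enter n g t g')
    from enter.IH have h: "1 \<le> n" "bipartite_turan n g" by auto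
    have "bipartite_turan (Suc n) g'"
      by (rule main_step[OF c_low c_high c0_low h enter.hyps(2,3,4)])
    then show ?case by simp
  qed
  then show ?thesis by blast
qed

end
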